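(* Assume Assumption (I), and let $(L_k,u_k)$ be a sequence generated by Algorithm A. Let $(u_{k_n})$ be a subsequence with $u_{k_n}\rightharpoonup\bar u$ weakly in $V$. Then \[ 2\int_\Omega\psi_{\epsilon_{k_n}}'(u_{k_n}^2)\,u_{k_n+1}^2\,dx\ \to\ p\int_\Omega|\bar u|^p\,dx\qquad(n\to\infty). \]
   Context: Standing assumptions: $\Omega\subset\mathbb R^d$ bounded Lipschitz domain; $V$ real Hilbert space with inner product $\langle\cdot,\cdot\rangle_V$, $V\subset L^2(\Omega)$ with compact and dense embedding; $V^*$ dual. $F:V\to\mathbb R$ weakly lower semicontinuous, bounded below by an affine function, continuously Fréchet differentiable. $\alpha>0$, $\beta>0$, $p\in(0,1)$. Assumption (I): the standing assumptions hold; $F'$ is completely continuous ($u_n\rightharpoonup u$ in $V$ implies $F'(u_n)\to F'(u)$ in $V^*$); and $F':V\to V^*$ is Lipschitz continuous on bounded sets. For $\epsilon>0$, $\psi_\epsilon(t)=\frac p2\frac{t}{\epsilon^{2-p}}+(1-\frac p2)\epsilon^p$ if $t\in[0,\epsilon^2)$, $\psi_\epsilon(t)=t^{p/2}$ if $t\ge\epsilon^2$, $\psi_\epsilon'(t)=\frac p2\min(\epsilon^{p-2},t^{(p-2)/2})$. Algorithm A: choose a monotonically decreasing sequence $\epsilon_k\searrow0$, constants $\gamma>1$, $\tilde L>0$, and $u_0\in V$. Given $u_k$, for $L\ge0$ let problem (Q$_{k,L}$) be $\min_{u\in V} F(u_k)+F'(u_k)(u-u_k)+\frac L2\|u-u_k\|_V^2+\frac\alpha2\|u\|_V^2+\beta\int_\Omega\big[\psi_{\epsilon_k}(u_k^2)+\psi_{\epsilon_k}'(u_k^2)(u^2-u_k^2)\big]dx$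 (strongly convex, unique minimizer), and let (D$_{k,L}$) be the condition $F(u_{k+1})\le F(u_k)+F'(u_k)(u_{k+1}-u_k)+L\|u_{k+1}-u_k\|_V^2$ for its minimizer $u_{k+1}$. $L_k$ is the smallest $L\in\{0\}\cup\{\tilde L\gamma^l:l\ge0\}$ for which (D$_{k,L}$) holds, and $u_{k+1}$ is the corresponding minimizer; then $k\mapsto k+1$. *)

theory Defs
  imports "HOL-Analysis.Analysis"
begin

definition lipschitz_domain :: "'d::euclidean_space set \<Rightarrow> bool" where
  "lipschitz_domain \<Omega> \<longleftrightarrow> open \<Omega> \<and> connected \<Omega> \<and> \<Omega> \<noteq> {} \<and>
     (\<forall>x\<in>frontier \<Omega>. \<exists>r>0. \<exists>T :: 'd \<Rightarrow> 'd. orthogonal_transformation T \<and> (\<exists>e\<in>Basis. \<exists>g M.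
        (\<forall>z w. \<bar>g z - g w\<bar> \<le> M * norm (z - w)) \<and>
        (\<forall>z t. g (z + t *\<^sub>R e) = g z) \<and>
        \<Omega> \<inter> ball x r = {y \<in> ball x r. T (y - x) \<bullet> e < g (T (y - x))}))"

definition sq_int :: "'d::euclidean_space set \<Rightarrow> ('d \<Rightarrow> real) \<Rightarrow> bool" where
  "sq_int \<Omega> f \<longleftrightarrow> f \<in> borel_measurable (lebesgue_on \<Omega>) \<and>
     integrable (lebesgue_on \<Omega>) (\<lambda>x. (f x)\<^sup>2)"

definition L2norm :: "'d::euclidean_space set \<Rightarrow> ('d \<Rightarrow> real) \<Rightarrow> real" where
  "L2norm \<Omega> f = sqrt (\<integral>x. (f x)\<^sup>2 \<partial>lebesgue_on \<Omega>)"

text \<open>iota identifies V with a subspace of L2(Omega) (functions taken up to a.e. equality):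
 linear, injective, continuous, compact and with dense range.\<close>
definition compact_dense_L2_embedding ::
  "'d::euclidean_space set \<Rightarrow> ('v::real_normed_vector \<Rightarrow> 'd \<Rightarrow> real) \<Rightarrow> bool" where
  "compact_dense_L2_embedding \<Omega> \<iota> \<longleftrightarrow>
     (\<forall>v. sq_int \<Omega> (\<iota> v)) \<and>
     (\<forall>a b v w. AE x in lebesgue_on \<Omega>. \<iota> (a *\<^sub>R v + b *\<^sub>R w) x = a * \<iota> v x + b * \<iota> w x) \<and>
     (\<forall>v. (AE x in lebesgue_on \<Omega>. \<iota> v x = 0) \<longrightarrow> v = 0) \<and>
     (\<exists>C. \<forall>v. L2norm \<Omega> (\<iota> v) \<le> C * norm v) \<and>
     (\<forall>vs :: nat \<Rightarrow> 'v. bounded (range vs) \<longrightarrow> (\<exists>r g. strict_mono r \<and> sq_int \<Omega> g \<and>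
         (\<lambda>n. L2norm \<Omega> (\<lambda>x. \<iota> (vs (r n)) x - g x)) \<longlonglongrightarrow> 0)) \<and>
     (\<forall>f e. sq_int \<Omega> f \<and> e > 0 \<longrightarrow> (\<exists>v. L2norm \<Omega> (\<lambda>x. \<iota> v x - f x) < e))"

definition weak_conv :: "(nat \<Rightarrow> 'v::real_inner) \<Rightarrow> 'v \<Rightarrow> bool" where
  "weak_conv xs u \<longleftrightarrow> (\<forall>y. (\<lambda>n. inner (xs n) y) \<longlonglongrightarrow> inner u y)"

definition psi :: "real \<Rightarrow> real \<Rightarrow> real \<Rightarrow> real" where
  "psi p \<epsilon> t = (if t < \<epsilon>\<^sup>2 then p / 2 * t / \<epsilon> powr (2 - p) + (1 - p / 2) * \<epsilon> powr p
                else t powr (p / 2))"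

text \<open>derivative: p/2 * min(eps^(p-2), t^((p-2)/2)), written by cases (for t >= 0)\<close>
definition dpsi :: "real \<Rightarrow> real \<Rightarrow> real \<Rightarrow> real" where
  "dpsi p \<epsilon> t = (if t < \<epsilon>\<^sup>2 then p / 2 * \<epsilon> powr (p - 2) else p / 2 * t powr ((p - 2) / 2))"

definition Qmodel ::
  "('v::real_inner \<Rightarrow> real) \<Rightarrow> ('v \<Rightarrow> 'v \<Rightarrow>\<^sub>L real) \<Rightarrow> real \<Rightarrow> real \<Rightarrow> real \<Rightarrow>
   'd::euclidean_space set \<Rightarrow> ('v \<Rightarrow> 'd \<Rightarrow> real) \<Rightarrow> real \<Rightarrow> 'v \<Rightarrow> real \<Rightarrow> 'v \<Rightarrow> real" where
  "Qmodel F F' \<alpha> \<beta> p \<Omega> \<iota> \<epsilon> uk L u =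
     F uk + blinfun_apply (F' uk) (u - uk) + L / 2 * (norm (u - uk))\<^sup>2 + \<alpha> / 2 * (norm u)\<^sup>2
     + \<beta> * (\<integral>x. psi p \<epsilon> ((\<iota> uk x)\<^sup>2) + dpsi p \<epsilon> ((\<iota> uk x)\<^sup>2) * ((\<iota> u x)\<^sup>2 - (\<iota> uk x)\<^sup>2)
               \<partial>lebesgue_on \<Omega>)"

definition is_minimizer :: "('v \<Rightarrow> real) \<Rightarrow> 'v \<Rightarrow> bool" where
  "is_minimizer f z \<longleftrightarrow> (\<forall>u. f z \<le> f u)"

definition descent_cond ::
  "('v::real_normed_vector \<Rightarrow> real) \<Rightarrow> ('v \<Rightarrow> 'v \<Rightarrow>\<^sub>L real) \<Rightarrow> 'v \<Rightarrow> real \<Rightarrow> 'v \<Rightarrow> bool" where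
  "descent_cond F F' uk L z \<longleftrightarrow>
     F z \<le> F uk + blinfun_apply (F' uk) (z - uk) + L * (norm (z - uk))\<^sup>2"

definition L_candidates :: "real \<Rightarrow> real \<Rightarrow> real set" where
  "L_candidates Lt \<gamma> = insert 0 {Lt * \<gamma> ^ l | l. True}"

definition algA_sequence ::
  "('v::real_inner \<Rightarrow> real) \<Rightarrow> ('v \<Rightarrow> 'v \<Rightarrow>\<^sub>L real) \<Rightarrow> real \<Rightarrow> real \<Rightarrow> real \<Rightarrow>
   'd::euclidean_space set \<Rightarrow> ('v \<Rightarrow> 'd \<Rightarrow> real) \<Rightarrow> (nat \<Rightarrow> real) \<Rightarrow> real \<Rightarrow> real \<Rightarrow> 'v \<Rightarrow>
   (nat \<Rightarrow> real) \<Rightarrow> (nat \<Rightarrow> 'v) \<Rightarrow> bool" where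
  "algA_sequence F F' \<alpha> \<beta> p \<Omega> \<iota> \<epsilon> \<gamma> Lt u0 Ls u \<longleftrightarrow>
     u 0 = u0 \<and>
     (\<forall>k. Ls k \<in> L_candidates Lt \<gamma> \<and>
          is_minimizer (Qmodel F F' \<alpha> \<beta> p \<Omega> \<iota> (\<epsilon> k) (u k) (Ls k)) (u (Suc k)) \<and>
          descent_cond F F' (u k) (Ls k) (u (Suc k)) \<and>
          (\<forall>L\<in>L_candidates Lt \<gamma>. L < Ls k \<longrightarrow>
             (\<forall>z. is_minimizer (Qmodel F F' \<alpha> \<beta> p \<Omega> \<iota> (\<epsilon> k) (u k) L) z \<longrightarrow>
                  \<not> descent_cond F F' (u k) L z)))"

end

theory Submission
  imports Defs
begin


lemma psi_alt:
  assumes "e > 0"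
  shows "psi p e t = (if t < e\<^sup>2 then (p/2) * e powr (p-2) * t + (1-p/2) * e powr p else t powr (p/2))"
proof -
  have 2: "p / 2 * t / e powr (2 - p) = p/2 * e powr (p-2) * t"
    using assms by (simp add: powr_diff field_simps)
  show ?thesis unfolding psi_def 2 by simp
qed

lemma dpsi_alt:
  assumes "e > 0"
  shows "dpsi p e t = (if t < e\<^sup>2 then (p/2) * e powr (p-2) else (p/2) * t powr (p/2-1))"
proof -
  have 2: "(p-2)/2 = p/2 - (1::real)" by simp
  show ?thesis unfolding dpsi_def 2 by simp
qed

lemma tangent_powr:
  fixes q c s :: real
  assumes "0 < q" "q < 1" "c > 0" "s \<ge> 0"
  shows "s powr q \<le> q * c powr (q-1) * s + (1-q) * c powr q"
proof (cases "s = 0")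
  case True then show ?thesis using assms by simp
next
  case False
  have "(c powr (q-1) * s) powr q * (c powr q) powr (1-q) \<le> q * (c powr (q-1) * s) + (1-q) * c powr q"
    by (rule Youngs_inequality_0) (use assms False in auto)
  moreover have "(c powr (q-1) * s) powr q * (c powr q) powr (1-q) = s powr q"
  proof -
    have "(c powr (q-1) * s) powr q * (c powr q) powr (1-q) = c powr ((q-1)*q + q*(1-q)) * s powr q"
      using assms False by (simp add: powr_mult powr_powr powr_add)
    also have "(q-1)*q + q*(1-q) = 0" by (simp add: algebra_simps)
    finally show ?thesis using assms by simp
  qed
  ultimately show ?thesis by (metis mult.assoc)
qed

lemma sq_powr: "(e::real) > 0 \<Longrightarrow> (e\<^sup>2) powr a = e powr (2*a)"
  by (simp add: powr_powr[symmetric] powr_realpow)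

text \<open>tangent line of t powr (p/2) at c = e^2\<close>
lemma tangent_eps:
  fixes p e s :: real
  assumes "0 < p" "p < 1" "e > 0" "s \<ge> 0"
  shows "s powr (p/2) \<le> p/2 * e powr (p-2) * s + (1-p/2) * e powr p"
proof -
  have "s powr (p/2) \<le> (p/2) * (e\<^sup>2) powr (p/2-1) * s + (1-p/2) * (e\<^sup>2) powr (p/2)"
    by (rule tangent_powr) (use assms in auto)
  moreover have "(e\<^sup>2) powr (p/2-1) = e powr (p-2)" "(e\<^sup>2) powr (p/2) = e powr p"
    using assms by (simp_all add: sq_powr algebra_simps)
  ultimately show ?thesis by simp
qed

lemma tangent_gen:
  fixes p c s :: real
  assumes "0 < p" "p < 1" "c > 0" "s \<ge> 0"
  shows "s powr (p/2) \<le> p/2 * c powr (p/2-1) * s + (1-p/2) * c powr (p/2)"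
  by (rule tangent_powr) (use assms in auto)

lemma tangent_cmp:
  fixes p c1 c2 s :: real
  assumes "0 < p" "p < 1" "0 < c1" "c1 \<le> c2" "s \<le> c1"
  shows "p/2 * c1 powr (p/2-1) * s + (1-p/2) * c1 powr (p/2)
       \<le> p/2 * c2 powr (p/2-1) * s + (1-p/2) * c2 powr (p/2)"
proof -
  have A: "c1 powr (p/2) \<le> p/2 * c2 powr (p/2-1) * c1 + (1-p/2) * c2 powr (p/2)"
    using tangent_gen[of p c2 c1] assms by auto
  have c1e: "c1 powr (p/2-1) * c1 = c1 powr (p/2)"
    using assms by (simp add: powr_diff)
  have B: "c2 powr (p/2-1) \<le> c1 powr (p/2-1)"
    by (rule powr_mono2') (use assms in auto)
  have C: "0 \<le> (p/2) * (c1 powr (p/2-1) - c2 powr (p/2-1)) * (c1 - s)"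
    using B assms by auto
  have "p/2 * c1 powr (p/2-1) * s + (1-p/2) * c1 powr (p/2)
      = c1 powr (p/2) - (p/2) * c1 powr (p/2-1) * (c1 - s)"
    by (simp only: c1e[symmetric]) (simp add: field_simps)
  also have "\<dots> \<le> p/2 * c2 powr (p/2-1) * c1 + (1-p/2) * c2 powr (p/2) - (p/2) * c1 powr (p/2-1) * (c1 - s)"
    using A by simp
  also have "\<dots> = p/2 * c2 powr (p/2-1) * s + (1-p/2) * c2 powr (p/2) - (p/2) * (c1 powr (p/2-1) - c2 powr (p/2-1)) * (c1 - s)"
    by (simp add: field_simps)
  also have "\<dots> \<le> p/2 * c2 powr (p/2-1) * s + (1-p/2) * c2 powr (p/2)"
    using C by linarith
  finally show ?thesis .
qed

lemma psi_alt2: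
  assumes "e > 0"
  shows "psi p e t = (if t < e\<^sup>2 then (p/2) * (e\<^sup>2) powr (p/2-1) * t + (1-p/2) * (e\<^sup>2) powr (p/2) else t powr (p/2))"
proof -
  have "(e\<^sup>2) powr (p/2-1) = e powr (p-2)" "(e\<^sup>2) powr (p/2) = e powr p"
    using assms by (simp_all add: sq_powr algebra_simps)
  then show ?thesis using psi_alt[OF assms] by simp
qed

lemma dpsi_alt2:
  assumes "e > 0"
  shows "dpsi p e t = (if t < e\<^sup>2 then (p/2) * (e\<^sup>2) powr (p/2-1) else (p/2) * t powr (p/2-1))"
proof -
  have "(e\<^sup>2) powr (p/2-1) = e powr (p-2)"
    using assms by (simp_all add: sq_powr algebra_simps)
  then show ?thesis using dpsi_alt[OF assms] by simp
qed

lemma psi_concave: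
  fixes p e s t :: real
  assumes "0 < p" "p < 1" "e > 0" "s \<ge> 0" "t \<ge> 0"
  shows "psi p e s \<le> psi p e t + dpsi p e t * (s - t)"
proof -
  define c where "c = e\<^sup>2"
  have c: "c > 0" using assms by (simp add: c_def)
  note P = psi_alt2[OF assms(3), of p, folded c_def]
  note D = dpsi_alt2[OF assms(3), of p, folded c_def]
  show ?thesis
  proof (cases "t < c")
    case tc: True
    show ?thesis
    proof (cases "s < c")
      case True then show ?thesis using tc unfolding P D by (simp add: field_simps)
    next
      case False
      then show ?thesis using tc tangent_gen[of p c s] assms c unfolding P D by (simp add: field_simps)
    qed
  next
    case tc: False
    then have t0: "t > 0" using c by auto
    have te: "t powr (p/2-1) * t = t powr (p/2)" using t0 by (simp add: powr_diff)
    have tan: "psi p e t + dpsi p e t * (s - t) = p/2 * t powr (p/2-1) * s + (1-p/2) * t powr (p/2)"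
      using tc unfolding P D by (simp only: if_False te[symmetric]) (simp add: field_simps)
    show ?thesis
    proof (cases "s < c")
      case True
      have "psi p e s = p/2 * c powr (p/2-1) * s + (1-p/2) * c powr (p/2)" using True P by simp
      also have "\<dots> \<le> p/2 * t powr (p/2-1) * s + (1-p/2) * t powr (p/2)"
        by (rule tangent_cmp) (use assms c tc True in auto)
      finally show ?thesis using tan by simp
    next
      case False
      then show ?thesis unfolding tan using P tangent_gen[of p t s] assms t0 by simp
    qed
  qed
qed

lemma psi_mono_eps:
  fixes p e1 e2 t :: real
  assumes "0 < p" "p < 1" "0 < e1" "e1 \<le> e2" "t \<ge> 0"
  shows "psi p e1 t \<le> psi p e2 t"
proof -
  have c12: "e1\<^sup>2 \<le> e2\<^sup>2" using assms by (simp add: power_mono)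
  note P1 = psi_alt2[of e1 p t] and P2 = psi_alt2[of e2 p t]
  show ?thesis
  proof (cases "t < e1\<^sup>2")
    case True
    then show ?thesis using P1 P2 assms c12 tangent_cmp[of p "e1\<^sup>2" "e2\<^sup>2" t] by auto
  next
    case False
    show ?thesis
    proof (cases "t < e2\<^sup>2")
      case True
      then show ?thesis using False P1 P2 assms tangent_gen[of p "e2\<^sup>2" t] by auto
    next
      case False2: False
      then show ?thesis using False P1 P2 assms by auto
    qed
  qed
qed

lemma dpsi_nonneg: "0 < p \<Longrightarrow> 0 < e \<Longrightarrow> 0 \<le> dpsi p e t"
  by (simp add: dpsi_alt)

lemma dpsi_le:
  assumes "0 < p" "p < 1" "0 < e" "t \<ge> 0"
  shows "dpsi p e t \<le> p/2 * e powr (p-2)"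
proof (cases "t < e\<^sup>2")
  case True then show ?thesis using assms by (simp add: dpsi_alt)
next
  case False
  have "t powr (p/2-1) \<le> (e\<^sup>2) powr (p/2-1)"
    by (rule powr_mono2') (use assms False in auto)
  moreover have "(e\<^sup>2) powr (p/2-1) = e powr (p-2)"
    using assms by (simp_all add: sq_powr algebra_simps)
  ultimately show ?thesis using False assms by (simp add: dpsi_alt)
qed

lemma psi_nonneg:
  assumes "0 < p" "p < 1" "0 < e" "t \<ge> 0"
  shows "0 \<le> psi p e t"
  using assms by (simp add: psi_alt)

lemma psi_approx:
  assumes "0 < p" "p < 1" "0 < e" "t \<ge> 0"
  shows "\<bar>psi p e t - t powr (p/2)\<bar> \<le> e powr p"
proof (cases "t < e\<^sup>2")
  case True
  have lo: "t powr (p/2) \<le> psi p e t"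
    using True tangent_eps[of p e t] assms by (simp add: psi_alt)
  have "e powr (p-2) * t \<le> e powr (p-2) * e\<^sup>2" using True assms by (intro mult_left_mono) auto
  also have "e powr (p-2) * e\<^sup>2 = e powr p"
  proof -
    have "e\<^sup>2 = e powr 2" using assms by (simp add: powr_numeral)
    moreover have "e powr (p-2) * e powr 2 = e powr (p - 2 + 2)" by (rule powr_add[symmetric])
    ultimately show ?thesis by simp
  qed
  finally have "psi p e t \<le> p/2 * e powr p + (1-p/2) * e powr p"
    using True assms by (simp add: psi_alt mult_left_mono mult.assoc)
  then have "psi p e t \<le> e powr p" by (simp add: algebra_simps)
  moreover have "0 \<le> t powr (p/2)" by simp
  ultimately show ?thesis using lo by linarith
next
  case False then show ?thesis using assms by (simp add: psi_alt)
qed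

lemma psi_le_lin:
  assumes "0 < p" "p < 1" "0 < e" "t \<ge> 0"
  shows "psi p e t \<le> e powr p + 1 + t"
proof -
  have "t powr (p/2) \<le> 1 + t"
  proof (cases "t \<le> 1")
    case True then have "t powr (p/2) \<le> 1 powr (p/2)" using assms by (intro powr_mono2) auto
    then show ?thesis using assms by simp
  next
    case False then have "t powr (p/2) \<le> t powr 1" using assms by (intro powr_mono) auto
    then show ?thesis using False by simp
  qed
  then show ?thesis using psi_approx[OF assms] by linarith
qed

lemma dpsi_approx:
  assumes "0 < p" "p < 1" "0 < e" "t \<ge> 0"
  shows "\<bar>2 * dpsi p e t * t - p * t powr (p/2)\<bar> \<le> p * e powr p"
proof (cases "t < e\<^sup>2")
  case True
  have "e powr (p-2) * t \<le> e powr (p-2) * e\<^sup>2" using True assms by (intro mult_left_mono) auto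
  also have "e powr (p-2) * e\<^sup>2 = e powr p"
  proof -
    have "e\<^sup>2 = e powr 2" using assms by (simp add: powr_numeral)
    moreover have "e powr (p-2) * e powr 2 = e powr (p - 2 + 2)" by (rule powr_add[symmetric])
    ultimately show ?thesis by simp
  qed
  finally have a: "e powr (p-2) * t \<le> e powr p" .
  have b: "t powr (p/2) \<le> (e\<^sup>2) powr (p/2)" using True assms by (intro powr_mono2) auto
  have "(e\<^sup>2) powr (p/2) = e powr p" using assms by (simp add: sq_powr)
  then have b': "t powr (p/2) \<le> e powr p" using b by simp
  have "2 * dpsi p e t * t - p * t powr (p/2) = p * (e powr (p-2) * t - t powr (p/2))"
    using True assms by (simp add: dpsi_alt algebra_simps)
  also have "\<bar>\<dots>\<bar> = p * \<bar>e powr (p-2) * t - t powr (p/2)\<bar>" using assms by (simp add: abs_mult)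
  also have "\<dots> \<le> p * e powr p"
  proof (rule mult_left_mono)
    have "0 \<le> e powr (p-2) * t" "0 \<le> t powr (p/2)" using assms by auto
    then show "\<bar>e powr (p-2) * t - t powr (p/2)\<bar> \<le> e powr p" using a b' by linarith
  qed (use assms in simp)
  finally show ?thesis .
next
  case False
  then have t0: "t > 0" using assms by (metis not_le order.strict_trans2 zero_less_power2 less_eq_real_def)
  have "t powr (p/2-1) * t = t powr (p/2)" using t0 by (simp add: powr_diff)
  then show ?thesis using False assms by (simp add: dpsi_alt mult.assoc)
qed

lemma powr_subadd:
  fixes a b p :: real
  assumes "0 \<le> a" "0 \<le> b" "0 < p" "p \<le> 1"
  shows "(a + b) powr p \<le> a powr p + b powr p"
proof (cases "a + b = 0")
  case True then show ?thesis using assms by simp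
next
  case False
  then have s: "a + b > 0" using assms by simp
  have "a/(a+b) \<le> (a/(a+b)) powr p"
    using powr_mono'[of p 1 "a/(a+b)"] assms s by simp
  moreover have "b/(a+b) \<le> (b/(a+b)) powr p"
    using powr_mono'[of p 1 "b/(a+b)"] assms s by simp
  moreover have "a/(a+b) + b/(a+b) = 1" using s by (simp add: add_divide_distrib[symmetric])
  ultimately have "1 \<le> (a/(a+b)) powr p + (b/(a+b)) powr p"
    by linarith
  also have "\<dots> = (a powr p + b powr p) / (a+b) powr p"
    using assms s by (simp add: powr_divide add_divide_distrib)
  finally show ?thesis using s by simp
qed

lemma abs_powr_diff:
  fixes x y p :: real
  assumes "0 < p" "p \<le> 1"
  shows "\<bar>\<bar>x\<bar> powr p - \<bar>y\<bar> powr p\<bar> \<le> \<bar>x - y\<bar> powr p"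
proof -
  have 1: "\<bar>x\<bar> powr p \<le> \<bar>y\<bar> powr p + \<bar>x - y\<bar> powr p" for x y :: real
  proof -
    have "\<bar>x\<bar> powr p \<le> (\<bar>y\<bar> + \<bar>x - y\<bar>) powr p"
      by (rule powr_mono2) (use assms in auto)
    also have "\<dots> \<le> \<bar>y\<bar> powr p + \<bar>x - y\<bar> powr p" by (rule powr_subadd) (use assms in auto)
    finally show ?thesis .
  qed
  show ?thesis using 1[of x y] 1[of y x] by (simp add: abs_minus_commute abs_le_iff)
qed

lemma abs_powr_le_sq:
  fixes x p \<eta> :: real
  assumes "0 < p" "p < 2" "\<eta> > 0"
  shows "\<bar>x\<bar> powr p \<le> \<eta> powr p + \<eta> powr (p-2) * x\<^sup>2"
proof (cases "\<bar>x\<bar> \<le> \<eta>")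
  case True
  then have "\<bar>x\<bar> powr p \<le> \<eta> powr p" using assms by (intro powr_mono2) auto
  moreover have "0 \<le> \<eta> powr (p-2) * x\<^sup>2" by simp
  ultimately show ?thesis by linarith
next
  case False
  then have x0: "\<bar>x\<bar> > 0" using assms by simp
  have "\<bar>x\<bar> powr p = \<bar>x\<bar> powr (p-2) * x\<^sup>2"
    using x0 by (simp add: powr_diff powr_realpow[symmetric])
  also have "\<dots> \<le> \<eta> powr (p-2) * x\<^sup>2"
    using False assms by (intro mult_right_mono powr_mono2') auto
  finally have "\<bar>x\<bar> powr p \<le> \<eta> powr (p-2) * x\<^sup>2" .
  moreover have "0 \<le> \<eta> powr p" by simp
  ultimately show ?thesis by linarith
qed

lemma quad_zero:
  fixes A B :: real
  assumes "\<And>t. 0 \<le> A * t\<^sup>2 + B * t"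
  shows "B = 0"
proof (rule ccontr)
  assume B: "B \<noteq> 0"
  define s where "s = 1 / (\<bar>A\<bar> + 1)"
  have s: "s > 0" "\<bar>A\<bar> * s < 1" by (auto simp: s_def field_simps)
  have h: "0 \<le> A * x\<^sup>2 + B * x" for x by (rule assms)
  define y where "y = - (B * s)"
  have "0 \<le> A * y\<^sup>2 + B * y" by (rule h)
  also have "\<dots> = B\<^sup>2 * s * (A * s - 1)" by (simp add: y_def power2_eq_square algebra_simps)
  also have "\<dots> < 0"
  proof -
    have "A * s - 1 < 0" using s by (smt (verit) abs_ge_self mult_right_mono)
    moreover have "B\<^sup>2 * s > 0" using B s by simp
    ultimately show ?thesis by (simp add: mult_pos_neg)
  qed
  finally show False by simp
qed


lemma psi_meas[measurable]: "psi p e \<in> borel_measurable borel"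
  unfolding psi_def by measurable

lemma dpsi_meas[measurable]: "dpsi p e \<in> borel_measurable borel"
  unfolding dpsi_def by measurable

definition sqi :: "'a measure \<Rightarrow> ('a \<Rightarrow> real) \<Rightarrow> bool" where
  "sqi M f \<longleftrightarrow> f \<in> borel_measurable M \<and> integrable M (\<lambda>x. (f x)\<^sup>2)"

lemma sqiD: "sqi M f \<Longrightarrow> f \<in> borel_measurable M" "sqi M f \<Longrightarrow> integrable M (\<lambda>x. (f x)\<^sup>2)"
  by (auto simp: sqi_def)

lemma sqi_mult_integrable:
  assumes "sqi M f" "sqi M g"
  shows "integrable M (\<lambda>x. f x * g x)"
proof (rule Bochner_Integration.integrable_bound)
  show "integrable M (\<lambda>x. (f x)\<^sup>2 + (g x)\<^sup>2)" using assms by (auto simp: sqi_def)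
  show "(\<lambda>x. f x * g x) \<in> borel_measurable M" using assms by (auto simp: sqi_def)
  show "AE x in M. norm (f x * g x) \<le> norm ((f x)\<^sup>2 + (g x)\<^sup>2)"
  proof (rule AE_I2)
    fix x
    have "2 * \<bar>f x\<bar> * \<bar>g x\<bar> \<le> (f x)\<^sup>2 + (g x)\<^sup>2"
      using sum_squares_bound[of "\<bar>f x\<bar>" "\<bar>g x\<bar>"] by (simp add: power2_eq_square)
    moreover have "0 \<le> \<bar>f x\<bar> * \<bar>g x\<bar>" by simp
    ultimately have "\<bar>f x\<bar> * \<bar>g x\<bar> \<le> (f x)\<^sup>2 + (g x)\<^sup>2" by linarith
    then show "norm (f x * g x) \<le> norm ((f x)\<^sup>2 + (g x)\<^sup>2)" by (simp add: abs_mult)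
  qed
qed

lemma sqi_add: "sqi M f \<Longrightarrow> sqi M g \<Longrightarrow> sqi M (\<lambda>x. f x + g x)"
  unfolding sqi_def power2_sum
  using sqi_mult_integrable[of M f g] by (auto simp: sqi_def mult.assoc)

lemma sqi_cmult: "sqi M f \<Longrightarrow> sqi M (\<lambda>x. c * f x)"
  unfolding sqi_def by (auto simp: power_mult_distrib)

lemma sqi_diff: "sqi M f \<Longrightarrow> sqi M g \<Longrightarrow> sqi M (\<lambda>x. f x - g x)"
  using sqi_add[of M f "\<lambda>x. (-1) * g x"] sqi_cmult[of M g "-1"] by simp

lemma sqi_zero: "sqi M (\<lambda>x. 0)"
  by (simp add: sqi_def)

lemma bounded_mult_integrable:
  fixes g h :: "'a \<Rightarrow> real"
  assumes "integrable M h" "g \<in> borel_measurable M" "\<And>x. \<bar>g x\<bar> \<le> K"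
  shows "integrable M (\<lambda>x. g x * h x)"
proof (rule Bochner_Integration.integrable_bound)
  show "integrable M (\<lambda>x. K * h x)" using assms by simp
  show "(\<lambda>x. g x * h x) \<in> borel_measurable M" using assms by (simp add: borel_measurable_integrable)
  show "AE x in M. norm (g x * h x) \<le> norm (K * h x)"
  proof (rule AE_I2)
    fix x
    have "\<bar>g x\<bar> * \<bar>h x\<bar> \<le> K * \<bar>h x\<bar>" using assms(3)[of x] by (simp add: mult_right_mono)
    moreover have "K \<ge> 0" using assms(3)[of x] by linarith
    ultimately show "norm (g x * h x) \<le> norm (K * h x)" by (simp add: abs_mult)
  qed
qed

lemma (in finite_measure) abs_powr_integrable:
  assumes "sqi M f" "0 < p" "p < 2"
  shows "integrable M (\<lambda>x. \<bar>f x\<bar> powr p)"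
proof (rule Bochner_Integration.integrable_bound)
  show "integrable M (\<lambda>x. 1 + (f x)\<^sup>2)" using assms by (auto simp: sqi_def)
  show "(\<lambda>x. \<bar>f x\<bar> powr p) \<in> borel_measurable M" using assms by (auto simp: sqi_def)
  show "AE x in M. norm (\<bar>f x\<bar> powr p) \<le> norm (1 + (f x)\<^sup>2)"
  proof (rule AE_I2)
    fix x
    have "\<bar>f x\<bar> powr p \<le> 1 powr p + 1 powr (p-2) * (f x)\<^sup>2"
      by (rule abs_powr_le_sq) (use assms in auto)
    then show "norm (\<bar>f x\<bar> powr p) \<le> norm (1 + (f x)\<^sup>2)" by simp
  qed
qed

lemma integral_CS:
  assumes "sqi M f" "sqi M g"
  shows "\<bar>\<integral>x. f x * g x \<partial>M\<bar> \<le> sqrt (\<integral>x. (f x)\<^sup>2 \<partial>M) * sqrt (\<integral>x. (g x)\<^sup>2 \<partial>M)"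
proof -
  define A where "A = (\<integral>x. (f x)\<^sup>2 \<partial>M)"
  define B where "B = (\<integral>x. (g x)\<^sup>2 \<partial>M)"
  define C where "C = (\<integral>x. f x * g x \<partial>M)"
  have iA: "integrable M (\<lambda>x. (f x)\<^sup>2)" and iB: "integrable M (\<lambda>x. (g x)\<^sup>2)"
    using assms by (auto simp: sqi_def)
  have iC: "integrable M (\<lambda>x. f x * g x)" by (rule sqi_mult_integrable[OF assms])
  have A0: "A \<ge> 0" "B \<ge> 0" unfolding A_def B_def by auto
  have q: "0 \<le> A + 2 * t * C + t\<^sup>2 * B" for t
  proof -
    have "0 \<le> (\<integral>x. (f x + t * g x)\<^sup>2 \<partial>M)" by simp
    also have "(\<integral>x. (f x + t * g x)\<^sup>2 \<partial>M) = (\<integral>x. (f x)\<^sup>2 + (2 * t) * (f x * g x) + t\<^sup>2 * (g x)\<^sup>2 \<partial>M)"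
      by (simp add: power2_sum power_mult_distrib algebra_simps)
    also have "\<dots> = A + 2 * t * C + t\<^sup>2 * B"
      using iA iB iC by (simp add: A_def B_def C_def)
    finally show ?thesis .
  qed
  have "C\<^sup>2 \<le> A * B"
  proof (cases "B = 0")
    case True
    have "C = 0"
    proof (rule ccontr)
      assume C: "C \<noteq> 0"
      have "0 \<le> A + 2 * (-(A+1)/(2*C)) * C + (-(A+1)/(2*C))\<^sup>2 * B" by (rule q)
      also have "\<dots> = -1" using C True by (simp add: field_simps)
      finally show False by simp
    qed
    then show ?thesis using True by simp
  next
    case False
    then have Bp: "B > 0" using A0 by simp
    have "0 \<le> A + 2 * (- C / B) * C + (- C / B)\<^sup>2 * B" by (rule q)
    also have "\<dots> = A - C\<^sup>2 / B" using Bp by (simp add: power2_eq_square field_simps)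
    finally show ?thesis using Bp by (simp add: field_simps)
  qed
  then have "sqrt (C\<^sup>2) \<le> sqrt (A * B)" by (rule real_sqrt_le_mono)
  then show ?thesis by (simp add: C_def A_def B_def real_sqrt_mult)
qed

lemma sq_diff_bound:
  assumes "sqi M f" "sqi M g"
  shows "(\<integral>x. (f x)\<^sup>2 \<partial>M) \<le> 2 * (\<integral>x. (g x)\<^sup>2 \<partial>M) + 2 * (\<integral>x. (f x - g x)\<^sup>2 \<partial>M)"
proof -
  have "(\<integral>x. (f x)\<^sup>2 \<partial>M) \<le> (\<integral>x. 2 * (g x)\<^sup>2 + 2 * (f x - g x)\<^sup>2 \<partial>M)"
  proof (rule integral_mono)
    show "integrable M (\<lambda>x. (f x)\<^sup>2)" using assms by (auto simp: sqi_def)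
    show "integrable M (\<lambda>x. 2 * (g x)\<^sup>2 + 2 * (f x - g x)\<^sup>2)"
      using assms sqi_diff[OF assms] by (auto simp: sqi_def)
    fix x
    have "0 \<le> (f x - 2 * g x)\<^sup>2" by simp
    then show "(f x)\<^sup>2 \<le> 2 * (g x)\<^sup>2 + 2 * (f x - g x)\<^sup>2"
      by (simp add: power2_eq_square algebra_simps)
  qed
  also have "\<dots> = 2 * (\<integral>x. (g x)\<^sup>2 \<partial>M) + 2 * (\<integral>x. (f x - g x)\<^sup>2 \<partial>M)"
    using assms sqi_diff[OF assms] by (simp add: sqi_def)
  finally show ?thesis .
qed


lemma maxseq_cauchy:
  fixes xs :: "nat \<Rightarrow> 'v::real_inner" and \<phi> :: "'v \<Rightarrow> real"
  assumes Sp: "S > 0" and xs1: "\<And>n. norm (xs n) \<le> 1" and xs2: "\<And>n. S - 1 / real (Suc n) < \<phi> (xs n)"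
    and absle: "\<And>z. \<bar>\<phi> z\<bar> \<le> S * norm z" and add: "\<And>x y. \<phi> (x + y) = \<phi> x + \<phi> y"
  shows "Cauchy xs"
proof (rule CauchyI)
  fix e :: real assume e: "e > 0"
  obtain N1 :: nat where N1: "8 / (S * e\<^sup>2) < real N1"
    using reals_Archimedean2 by blast
  obtain N2 :: nat where N2: "1 / S < real N2"
    using reals_Archimedean2 by blast
  define N where "N = max N1 N2"
  have "real N1 \<le> real (Suc N)" "real N2 \<le> real (Suc N)" by (auto simp: N_def)
  then have a: "8 / (S * e\<^sup>2) < real (Suc N)" "1 / S < real (Suc N)" using N1 N2 by linarith+
  have pos: "S * e\<^sup>2 > 0" using Sp e by simp
  have "8 < real (Suc N) * (S * e\<^sup>2)" using a(1) pos by (simp add: divide_less_eq)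
  have N_1: "4 * 2 / (S * real (Suc N)) < e\<^sup>2"
  proof -
    have "S * real (Suc N) > 0" using Sp by simp
    then show ?thesis using \<open>8 < real (Suc N) * (S * e\<^sup>2)\<close> by (simp add: pos_divide_less_eq algebra_simps)
  qed
  have N_2: "2 / real (Suc N) \<le> 2 * S"
    using a(2) Sp by (simp add: field_simps)
  show "\<exists>M. \<forall>m\<ge>M. \<forall>n\<ge>M. norm (xs m - xs n) < e"
  proof (intro exI[of _ N] allI impI)
    fix m n assume mn: "N \<le> m" "N \<le> n"
    define d where "d = 1 / real (Suc m) + 1 / real (Suc n)"
    have dle: "d \<le> 2 / real (Suc N)"
    proof -
      have "1 / real (Suc m) \<le> 1 / real (Suc N)" "1 / real (Suc n) \<le> 1 / real (Suc N)"
        using mn by (auto intro!: divide_left_mono)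
      then show ?thesis by (simp add: d_def)
    qed
    have d0: "d \<ge> 0" by (simp add: d_def)
    have "2 * S - d < \<phi> (xs m + xs n)" using xs2[of m] xs2[of n] add[of "xs m" "xs n"] by (simp add: d_def)
    also have "\<dots> \<le> S * norm (xs m + xs n)" using absle[of "xs m + xs n"] by (simp add: abs_le_iff)
    finally have "2 * S - d < S * norm (xs m + xs n)" .
    then have lo: "2 - d / S \<le> norm (xs m + xs n)" using Sp by (simp add: field_simps)
    have "d \<le> 2 * S" using dle N_2 by linarith
    then have dS: "d / S \<le> 2" using Sp by (simp add: pos_divide_le_eq mult.commute)
    have "(2 - d / S)\<^sup>2 \<le> (norm (xs m + xs n))\<^sup>2"
      using lo dS by (intro power_mono) auto
    moreover have "4 - 4 * (d / S) \<le> (2 - d / S)\<^sup>2" by (simp add: power2_eq_square algebra_simps)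
    moreover have "(norm (xs m - xs n))\<^sup>2 + (norm (xs m + xs n))\<^sup>2 = 2 * (norm (xs m))\<^sup>2 + 2 * (norm (xs n))\<^sup>2"
      unfolding power2_norm_eq_inner by (simp add: inner_diff_left inner_diff_right inner_add_left inner_add_right inner_commute)
    moreover have "(norm (xs m))\<^sup>2 \<le> 1" "(norm (xs n))\<^sup>2 \<le> 1"
      using xs1[of m] xs1[of n] by (auto simp: power_le_one)
    ultimately have "(norm (xs m - xs n))\<^sup>2 \<le> 4 * (d / S)" by linarith
    also have "\<dots> \<le> 4 * ((2 / real (Suc N)) / S)"
      using dle Sp by (intro mult_left_mono divide_right_mono) auto
    also have "\<dots> = 4 * 2 / (S * real (Suc N))" by (simp add: mult.commute)
    also have "\<dots> < e\<^sup>2" by (rule N_1)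
    finally show "norm (xs m - xs n) < e"
      using e by (simp add: power_less_imp_less_base)
  qed
qed


lemma riesz_rep:
  fixes \<phi> :: "'v::{real_inner,complete_space} \<Rightarrow> real"
  assumes add: "\<And>x y. \<phi> (x + y) = \<phi> x + \<phi> y"
    and scal: "\<And>a x. \<phi> (a *\<^sub>R x) = a * \<phi> x"
    and bnd: "\<And>x. norm x \<le> 1 \<Longrightarrow> \<bar>\<phi> x\<bar> \<le> K"
  shows "\<exists>y. \<forall>x. \<phi> x = inner x y"
proof -
  define B where "B = {x::'v. norm x \<le> 1}"
  define S where "S = Sup (\<phi> ` B)"
  have bdd: "bdd_above (\<phi> ` B)" using bnd unfolding B_def bdd_above_def by (auto simp: abs_le_iff)
  have "0 \<in> B" unfolding B_def by simp
  then have ne: "\<phi> ` B \<noteq> {}" by auto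
  have phi0: "\<phi> 0 = 0" using scal[of 0 0] by simp
  have phineg: "\<phi> (- x) = - \<phi> x" for x using scal[of "-1" x] by simp
  have upper: "\<phi> x \<le> S" if "norm x \<le> 1" for x
    unfolding S_def by (rule cSup_upper) (use that bdd B_def in auto)
  have S0: "S \<ge> 0" using upper[of 0] phi0 by simp
  have absle: "\<bar>\<phi> z\<bar> \<le> S * norm z" for z
  proof (cases "z = 0")
    case True then show ?thesis using phi0 by simp
  next
    case False
    define w where "w = (1 / norm z) *\<^sub>R z"
    have nw: "norm w \<le> 1" "norm (-w) \<le> 1" using False by (auto simp: w_def)
    have "\<phi> w = \<phi> z / norm z" using scal by (simp add: w_def)
    then have "\<phi> z / norm z \<le> S" "- (\<phi> z / norm z) \<le> S"
      using upper[OF nw(1)] upper[OF nw(2)] phineg[of w] by auto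
    then have "\<phi> z \<le> S * norm z" "- \<phi> z \<le> S * norm z"
      using False by (auto simp: field_simps)
    then show ?thesis by (simp add: abs_le_iff)
  qed
  show ?thesis
  proof (cases "S = 0")
    case True
    then have "\<phi> x = 0" for x using absle[of x] by simp
    then show ?thesis by (intro exI[of _ 0]) simp
  next
    case False
    then have Sp: "S > 0" using S0 by simp
    have "\<exists>x. norm x \<le> 1 \<and> S - 1 / real (Suc n) < \<phi> x" for n
    proof -
      have "S - 1 / real (Suc n) < S" by simp
      then obtain y where "y \<in> \<phi> ` B" "S - 1 / real (Suc n) < y"
        unfolding S_def using less_cSupE[OF _ ne] by blast
      then show ?thesis unfolding B_def by auto
    qed
    then have "\<exists>xs. \<forall>n. norm (xs n) \<le> 1 \<and> S - 1 / real (Suc n) < \<phi> (xs n)"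
      by (intro choice allI) blast
    then obtain xs where xs0: "\<forall>n. norm (xs n) \<le> 1 \<and> S - 1 / real (Suc n) < \<phi> (xs n)"
      by (elim exE)
    have xs: "\<And>n. norm (xs n) \<le> 1" "\<And>n. S - 1 / real (Suc n) < \<phi> (xs n)"
      using xs0 by simp_all
    have Cauchy: "Cauchy xs"
      by (rule maxseq_cauchy[of S xs \<phi>]) (use Sp xs absle add in auto)
    then obtain xst where lim: "xs \<longlonglongrightarrow> xst"
      using Cauchy_convergent_iff convergent_def by blast
    have nx: "norm xst \<le> 1"
      by (rule tendsto_upperbound[OF tendsto_norm[OF lim]]) (use xs(1) in auto)
    have philim: "(\<lambda>n. \<phi> (xs n)) \<longlonglongrightarrow> \<phi> xst"
    proof -
      have t1: "(\<lambda>n. S * norm (xs n - xst)) \<longlonglongrightarrow> S * 0"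
        using lim by (intro tendsto_mult tendsto_const) (simp add: tendsto_norm_zero_iff LIM_zero_iff)
      have t2: "\<bar>\<phi> (xs n) - \<phi> xst\<bar> \<le> S * norm (xs n - xst)" for n
      proof -
        have "\<phi> (xs n) = \<phi> (xs n - xst) + \<phi> xst" using add[of "xs n - xst" xst] by simp
        then show ?thesis using absle[of "xs n - xst"] by simp
      qed
      have "(\<lambda>n. \<phi> (xs n) - \<phi> xst) \<longlonglongrightarrow> 0"
      proof (rule Lim_null_comparison[where g = "\<lambda>n. S * norm (xs n - xst)"])
        show "\<forall>\<^sub>F n in sequentially. norm (\<phi> (xs n) - \<phi> xst) \<le> S * norm (xs n - xst)"
          using t2 by (simp add: always_eventually)
        show "(\<lambda>n. S * norm (xs n - xst)) \<longlonglongrightarrow> 0" using t1 by simp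
      qed
      then show ?thesis by (rule LIM_zero_cancel)
    qed
    have phiS: "\<phi> xst = S"
    proof -
      have limS: "(\<lambda>n. S - 1 / real (Suc n)) \<longlonglongrightarrow> S - 0"
        by (intro tendsto_diff tendsto_const LIMSEQ_inverse_real_of_nat[unfolded inverse_eq_divide])
      have ev: "\<forall>\<^sub>F n in sequentially. S - 1 / real (Suc n) \<le> \<phi> (xs n)"
        by (intro always_eventually allI less_imp_le xs(2))
      have "S - 0 \<le> \<phi> xst"
        by (rule tendsto_le[OF trivial_limit_sequentially philim limS ev])
      then have "S \<le> \<phi> xst" by simp
      moreover have "\<phi> xst \<le> S" using upper[OF nx] .
      ultimately show ?thesis by simp
    qed
    have key: "(S + t * \<phi> v)\<^sup>2 \<le> S\<^sup>2 * ((norm xst)\<^sup>2 + 2 * t * inner xst v + t\<^sup>2 * (norm v)\<^sup>2)" for t v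
    proof -
      have "\<phi> (xst + t *\<^sub>R v) = S + t * \<phi> v" using add scal phiS by simp
      then have "\<bar>S + t * \<phi> v\<bar> \<le> S * norm (xst + t *\<^sub>R v)" using absle by metis
      then have "(S + t * \<phi> v)\<^sup>2 \<le> (S * norm (xst + t *\<^sub>R v))\<^sup>2"
        by (metis abs_le_square_iff abs_of_nonneg Sp norm_ge_zero less_imp_le mult_nonneg_nonneg)
      also have "\<dots> = S\<^sup>2 * (norm (xst + t *\<^sub>R v))\<^sup>2" by (simp add: power_mult_distrib)
      also have "(norm (xst + t *\<^sub>R v))\<^sup>2 = (norm xst)\<^sup>2 + 2 * t * inner xst v + t\<^sup>2 * (norm v)\<^sup>2"
        unfolding power2_norm_eq_inner
        by (simp add: inner_add_left inner_add_right inner_commute power2_eq_square algebra_simps)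
      finally show ?thesis .
    qed
    have n1: "norm xst = 1"
    proof -
      have "S\<^sup>2 \<le> S\<^sup>2 * (norm xst)\<^sup>2" using key[of 0 0] by simp
      then have "1 \<le> (norm xst)\<^sup>2" using Sp by simp
      then have "1 \<le> norm xst" using power2_le_imp_le[of 1 "norm xst"] by simp  
      then show ?thesis using nx by simp
    qed
    show ?thesis
    proof (intro exI[of _ "S *\<^sub>R xst"] allI)
      fix v
      have "2 * (S\<^sup>2 * inner xst v - S * \<phi> v) = 0"
      proof (rule quad_zero[of "S\<^sup>2 * (norm v)\<^sup>2 - (\<phi> v)\<^sup>2"])
        fix t
        show "0 \<le> (S\<^sup>2 * (norm v)\<^sup>2 - (\<phi> v)\<^sup>2) * t\<^sup>2 + 2 * (S\<^sup>2 * inner xst v - S * \<phi> v) * t"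
          using key[of t v] n1 by (simp add: power2_eq_square algebra_simps)
      qed
      then have "S * (S * inner xst v - \<phi> v) = 0" by (simp add: power2_eq_square algebra_simps)
      then show "\<phi> v = inner v (S *\<^sub>R xst)" using Sp by (simp add: inner_commute)
    qed
  qed
qed


locale setting =
  fixes \<Omega> :: "'d::euclidean_space set" and \<iota> :: "'v::{real_inner,complete_space} \<Rightarrow> 'd \<Rightarrow> real"
    and F :: "'v \<Rightarrow> real" and F' :: "'v \<Rightarrow> 'v \<Rightarrow>\<^sub>L real" and \<alpha> \<beta> p :: real
  assumes \<Omega>lm: "\<Omega> \<in> lmeasurable"
    and emb: "compact_dense_L2_embedding \<Omega> \<iota>"
    and alpha: "\<alpha> > 0" and beta: "\<beta> > 0" and p0: "0 < p" and p1: "p < 1"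
begin

abbreviation "M \<equiv> lebesgue_on \<Omega>"

lemma fin: "finite_measure M"
  by (rule finite_measure_lebesgue_on[OF \<Omega>lm])

lemmas emb' = emb[unfolded compact_dense_L2_embedding_def]

lemma sqi_iota: "sqi M (\<iota> v)"
  using conjunct1[OF emb'] unfolding sq_int_def sqi_def by simp

lemma iota_meas[measurable]: "\<iota> v \<in> borel_measurable M"
  using sqi_iota by (simp add: sqi_def)

lemma iota_lin: "AE x in M. \<iota> (a *\<^sub>R v + b *\<^sub>R w) x = a * \<iota> v x + b * \<iota> w x"
  using conjunct1[OF conjunct2[OF emb']] by simp

lemma iota_add_scale: "AE x in M. \<iota> (z + t *\<^sub>R w) x = \<iota> z x + t * \<iota> w x"
  using iota_lin[of 1 z t w] by simp

lemma iota_diff: "AE x in M. \<iota> (z - w) x = \<iota> z x - \<iota> w x"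
  using iota_lin[of 1 z "-1" w] by simp

lemma iota_bound: "\<exists>C\<ge>0. \<forall>v. (\<integral>x. (\<iota> v x)\<^sup>2 \<partial>M) \<le> C * (norm v)\<^sup>2"
proof -
  obtain C where C: "\<And>v. L2norm \<Omega> (\<iota> v) \<le> C * norm v"
    using conjunct1[OF conjunct2[OF conjunct2[OF conjunct2[OF emb']]]] by blast
  have "(\<integral>x. (\<iota> v x)\<^sup>2 \<partial>M) \<le> C\<^sup>2 * (norm v)\<^sup>2" for v
  proof -
    have i0: "0 \<le> (\<integral>x. (\<iota> v x)\<^sup>2 \<partial>M)" by simp
    have "sqrt (\<integral>x. (\<iota> v x)\<^sup>2 \<partial>M) \<le> C * norm v" using C[of v] by (simp add: L2norm_def)
    then have "(sqrt (\<integral>x. (\<iota> v x)\<^sup>2 \<partial>M))\<^sup>2 \<le> (C * norm v)\<^sup>2"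
      by (intro power_mono) auto
    then show ?thesis using i0 by (simp add: power_mult_distrib)
  qed
  then show ?thesis by (intro exI[of _ "C\<^sup>2"]) auto
qed

definition Pint :: "real \<Rightarrow> 'v \<Rightarrow> real" where
  "Pint e u = (\<integral>x. psi p e ((\<iota> u x)\<^sup>2) \<partial>M)"

definition Gint :: "real \<Rightarrow> 'v \<Rightarrow> 'v \<Rightarrow> 'v \<Rightarrow> real" where
  "Gint e uk u w = (\<integral>x. dpsi p e ((\<iota> uk x)\<^sup>2) * (\<iota> u x * \<iota> w x) \<partial>M)"

lemma dpsi_bnd:
  assumes "e > 0"
  shows "\<bar>dpsi p e ((\<iota> uk x)\<^sup>2)\<bar> \<le> p/2 * e powr (p-2)"
  using dpsi_le[OF p0 p1 assms, of "(\<iota> uk x)\<^sup>2"] dpsi_nonneg[OF p0 assms] by simp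

lemma G_integrable:
  assumes "e > 0" "sqi M f" "sqi M g"
  shows "integrable M (\<lambda>x. dpsi p e ((\<iota> uk x)\<^sup>2) * (f x * g x))"
  by (rule bounded_mult_integrable[OF sqi_mult_integrable[OF assms(2,3)] _ dpsi_bnd[OF assms(1)]]) measurable

lemma G_integrable_iota:
  assumes "e > 0"
  shows "integrable M (\<lambda>x. dpsi p e ((\<iota> uk x)\<^sup>2) * (\<iota> u x * \<iota> w x))"
  by (rule G_integrable[OF assms sqi_iota sqi_iota])

lemma P_integrable:
  assumes "e > 0" "sqi M f"
  shows "integrable M (\<lambda>x. psi p e ((f x)\<^sup>2))"
proof (rule Bochner_Integration.integrable_bound)
  interpret finite_measure M by (rule fin)
  show "integrable M (\<lambda>x. e powr p + 1 + (f x)\<^sup>2)" using assms by (auto simp: sqi_def)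
  have [measurable]: "f \<in> borel_measurable M" using assms by (simp add: sqi_def)
  show "(\<lambda>x. psi p e ((f x)\<^sup>2)) \<in> borel_measurable M" by measurable
  show "AE x in M. norm (psi p e ((f x)\<^sup>2)) \<le> norm (e powr p + 1 + (f x)\<^sup>2)"
    using psi_le_lin[OF p0 p1 assms(1)] psi_nonneg[OF p0 p1 assms(1)] by (intro AE_I2) simp
qed

lemma G_nonneg: "e > 0 \<Longrightarrow> 0 \<le> Gint e uk w w"
  unfolding Gint_def using dpsi_nonneg[OF p0] by (intro integral_nonneg_AE AE_I2) auto

lemma Qmodel_split:
  assumes e: "e > 0"
  shows "Qmodel F F' \<alpha> \<beta> p \<Omega> \<iota> e uk L u =
     F uk + blinfun_apply (F' uk) (u - uk) + L / 2 * (norm (u - uk))\<^sup>2 + \<alpha> / 2 * (norm u)\<^sup>2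
     + \<beta> * (Pint e uk + Gint e uk u u - Gint e uk uk uk)"
proof -
  have "(\<integral>x. psi p e ((\<iota> uk x)\<^sup>2) + dpsi p e ((\<iota> uk x)\<^sup>2) * ((\<iota> u x)\<^sup>2 - (\<iota> uk x)\<^sup>2) \<partial>M)
     = (\<integral>x. psi p e ((\<iota> uk x)\<^sup>2) + (dpsi p e ((\<iota> uk x)\<^sup>2) * (\<iota> u x * \<iota> u x)
           - dpsi p e ((\<iota> uk x)\<^sup>2) * (\<iota> uk x * \<iota> uk x)) \<partial>M)"
    by (simp add: power2_eq_square algebra_simps)
  also have "\<dots> = Pint e uk + Gint e uk u u - Gint e uk uk uk"
    unfolding Pint_def Gint_def
    using P_integrable[OF e sqi_iota] G_integrable_iota[OF e]
    by (simp add: integral_add integral_diff)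
  finally show ?thesis unfolding Qmodel_def by simp
qed

lemma Gint_expand:
  assumes e: "e > 0"
  shows "Gint e uk (z + t *\<^sub>R w) (z + t *\<^sub>R w) = Gint e uk z z + 2 * t * Gint e uk z w + t\<^sup>2 * Gint e uk w w"
proof -
  have "Gint e uk (z + t *\<^sub>R w) (z + t *\<^sub>R w) =
        (\<integral>x. dpsi p e ((\<iota> uk x)\<^sup>2) * ((\<iota> z x + t * \<iota> w x) * (\<iota> z x + t * \<iota> w x)) \<partial>M)"
    unfolding Gint_def
    by (rule integral_cong_AE) (use iota_add_scale[of z t w] in \<open>auto elim!: AE_mp\<close>)
  also have "\<dots> = (\<integral>x. dpsi p e ((\<iota> uk x)\<^sup>2) * (\<iota> z x * \<iota> z x)
       + (2 * t) * (dpsi p e ((\<iota> uk x)\<^sup>2) * (\<iota> z x * \<iota> w x))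
       + t\<^sup>2 * (dpsi p e ((\<iota> uk x)\<^sup>2) * (\<iota> w x * \<iota> w x)) \<partial>M)"
    by (simp add: power2_eq_square algebra_simps)
  also have "\<dots> = Gint e uk z z + 2 * t * Gint e uk z w + t\<^sup>2 * Gint e uk w w"
    unfolding Gint_def using G_integrable_iota[OF e]
    by (simp add: integral_add)
  finally show ?thesis .
qed


lemma Q_line:
  assumes e: "e > 0"
  shows "Qmodel F F' \<alpha> \<beta> p \<Omega> \<iota> e uk L (z + t *\<^sub>R w) - Qmodel F F' \<alpha> \<beta> p \<Omega> \<iota> e uk L z
    = ((L + \<alpha>) / 2 * (norm w)\<^sup>2 + \<beta> * Gint e uk w w) * t\<^sup>2
      + (blinfun_apply (F' uk) w + L * inner (z - uk) w + \<alpha> * inner z w + 2 * \<beta> * Gint e uk z w) * t"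
proof -
  have n1: "(norm (z + t *\<^sub>R w - uk))\<^sup>2 = (norm (z - uk))\<^sup>2 + 2 * t * inner (z - uk) w + t\<^sup>2 * (norm w)\<^sup>2"
  proof -
    have "z + t *\<^sub>R w - uk = (z - uk) + t *\<^sub>R w" by simp
    then show ?thesis unfolding power2_norm_eq_inner
      by (simp add: inner_add_left inner_add_right inner_commute power2_eq_square algebra_simps)
  qed
  have n2: "(norm (z + t *\<^sub>R w))\<^sup>2 = (norm z)\<^sup>2 + 2 * t * inner z w + t\<^sup>2 * (norm w)\<^sup>2"
    unfolding power2_norm_eq_inner
    by (simp add: inner_add_left inner_add_right inner_commute power2_eq_square algebra_simps)
  have lF: "blinfun_apply (F' uk) (z + t *\<^sub>R w - uk) = blinfun_apply (F' uk) (z - uk) + t * blinfun_apply (F' uk) w"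
  proof -
    have eq: "z + t *\<^sub>R w - uk = (z - uk) + t *\<^sub>R w" by simp
    show ?thesis unfolding eq blinfun.add_right blinfun.scaleR_right by simp
  qed
  show ?thesis
    unfolding Qmodel_split[OF e] Gint_expand[OF e] n1 n2 lF
    by (simp add: algebra_simps)
qed

lemma strong_min:
  assumes e: "e > 0" and min: "is_minimizer (Qmodel F F' \<alpha> \<beta> p \<Omega> \<iota> e uk L) z"
  shows "Qmodel F F' \<alpha> \<beta> p \<Omega> \<iota> e uk L (z + w) - Qmodel F F' \<alpha> \<beta> p \<Omega> \<iota> e uk L z
         \<ge> (L + \<alpha>) / 2 * (norm w)\<^sup>2"
proof -
  define A where "A = (L + \<alpha>) / 2 * (norm w)\<^sup>2 + \<beta> * Gint e uk w w"
  define B where "B = blinfun_apply (F' uk) w + L * inner (z - uk) w + \<alpha> * inner z w + 2 * \<beta> * Gint e uk z w"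
  have "0 \<le> A * t\<^sup>2 + B * t" for t
  proof -
    have "Qmodel F F' \<alpha> \<beta> p \<Omega> \<iota> e uk L z \<le> Qmodel F F' \<alpha> \<beta> p \<Omega> \<iota> e uk L (z + t *\<^sub>R w)"
      using min unfolding is_minimizer_def by blast
    then show ?thesis using Q_line[OF e, of uk L z t w] unfolding A_def B_def by simp
  qed
  then have B0: "B = 0" by (rule quad_zero)
  have "Qmodel F F' \<alpha> \<beta> p \<Omega> \<iota> e uk L (z + w) - Qmodel F F' \<alpha> \<beta> p \<Omega> \<iota> e uk L z = A"
    using Q_line[OF e, of uk L z 1 w] B0 unfolding A_def B_def by simp
  moreover have "\<beta> * Gint e uk w w \<ge> 0" using G_nonneg[OF e] beta by simp
  ultimately show ?thesis unfolding A_def by simp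
qed

definition Phi :: "real \<Rightarrow> 'v \<Rightarrow> real" where
  "Phi e v = F v + \<alpha> / 2 * (norm v)\<^sup>2 + \<beta> * Pint e v"

lemma Pint_concave:
  assumes e: "e > 0"
  shows "Pint e z \<le> Pint e uk + Gint e uk z z - Gint e uk uk uk"
proof -
  have "Pint e uk + Gint e uk z z - Gint e uk uk uk =
      (\<integral>x. psi p e ((\<iota> uk x)\<^sup>2) + dpsi p e ((\<iota> uk x)\<^sup>2) * (\<iota> z x * \<iota> z x)
           - dpsi p e ((\<iota> uk x)\<^sup>2) * (\<iota> uk x * \<iota> uk x) \<partial>M)"
    unfolding Pint_def Gint_def
    using P_integrable[OF e sqi_iota] G_integrable_iota[OF e]
    by (simp add: integral_add integral_diff)
  moreover have "Pint e z \<le> (\<integral>x. psi p e ((\<iota> uk x)\<^sup>2) + dpsi p e ((\<iota> uk x)\<^sup>2) * (\<iota> z x * \<iota> z x)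
           - dpsi p e ((\<iota> uk x)\<^sup>2) * (\<iota> uk x * \<iota> uk x) \<partial>M)"
    unfolding Pint_def
  proof (rule integral_mono)
    show "integrable M (\<lambda>x. psi p e ((\<iota> z x)\<^sup>2))" by (rule P_integrable[OF e sqi_iota])
    show "integrable M (\<lambda>x. psi p e ((\<iota> uk x)\<^sup>2) + dpsi p e ((\<iota> uk x)\<^sup>2) * (\<iota> z x * \<iota> z x)
           - dpsi p e ((\<iota> uk x)\<^sup>2) * (\<iota> uk x * \<iota> uk x))"
      using P_integrable[OF e sqi_iota] G_integrable_iota[OF e] by simp
    fix x
    have "psi p e ((\<iota> z x)\<^sup>2) \<le> psi p e ((\<iota> uk x)\<^sup>2) + dpsi p e ((\<iota> uk x)\<^sup>2) * ((\<iota> z x)\<^sup>2 - (\<iota> uk x)\<^sup>2)"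
      by (rule psi_concave[OF p0 p1 e]) auto
    then show "psi p e ((\<iota> z x)\<^sup>2) \<le> psi p e ((\<iota> uk x)\<^sup>2) + dpsi p e ((\<iota> uk x)\<^sup>2) * (\<iota> z x * \<iota> z x)
           - dpsi p e ((\<iota> uk x)\<^sup>2) * (\<iota> uk x * \<iota> uk x)"
      by (simp add: power2_eq_square algebra_simps)
  qed
  ultimately show ?thesis by simp
qed

lemma Q_at_uk:
  assumes e: "e > 0"
  shows "Qmodel F F' \<alpha> \<beta> p \<Omega> \<iota> e uk L uk = Phi e uk"
  unfolding Qmodel_split[OF e] Phi_def by simp

lemma descent_step:
  assumes e: "e > 0" and min: "is_minimizer (Qmodel F F' \<alpha> \<beta> p \<Omega> \<iota> e uk L) z"
    and dc: "descent_cond F F' uk L z"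
  shows "Phi e z \<le> Phi e uk - \<alpha> / 2 * (norm (z - uk))\<^sup>2"
proof -
  have sm: "Qmodel F F' \<alpha> \<beta> p \<Omega> \<iota> e uk L (z + (uk - z)) - Qmodel F F' \<alpha> \<beta> p \<Omega> \<iota> e uk L z
         \<ge> (L + \<alpha>) / 2 * (norm (uk - z))\<^sup>2"
    by (rule strong_min[OF e min])
  have nm: "norm (uk - z) = norm (z - uk)" by (rule norm_minus_commute)
  have Qz: "Qmodel F F' \<alpha> \<beta> p \<Omega> \<iota> e uk L z = F uk + blinfun_apply (F' uk) (z - uk) + L / 2 * (norm (z - uk))\<^sup>2 + \<alpha> / 2 * (norm z)\<^sup>2
     + \<beta> * (Pint e uk + Gint e uk z z - Gint e uk uk uk)" by (rule Qmodel_split[OF e])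
  have Fz: "F z \<le> F uk + blinfun_apply (F' uk) (z - uk) + L * (norm (z - uk))\<^sup>2"
    using dc unfolding descent_cond_def .
  have Pz: "\<beta> * Pint e z \<le> \<beta> * (Pint e uk + Gint e uk z z - Gint e uk uk uk)"
    using Pint_concave[OF e, of z uk] beta by simp
  have "Phi e z \<le> Qmodel F F' \<alpha> \<beta> p \<Omega> \<iota> e uk L z + L / 2 * (norm (z - uk))\<^sup>2"
    unfolding Phi_def Qz using Fz Pz by simp
  also have "\<dots> \<le> Phi e uk - \<alpha> / 2 * (norm (z - uk))\<^sup>2"
    using sm Q_at_uk[OF e, of uk L] nm by (simp add: field_simps)
  finally show ?thesis .
qed

lemma Pint_nonneg: "e > 0 \<Longrightarrow> 0 \<le> Pint e v"
  unfolding Pint_def using psi_nonneg[OF p0 p1] by (intro integral_nonneg_AE AE_I2) auto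

lemma Phi_mono:
  assumes "0 < e1" "e1 \<le> e2"
  shows "Phi e1 v \<le> Phi e2 v"
proof -
  have "Pint e1 v \<le> Pint e2 v"
    unfolding Pint_def
    by (rule integral_mono[OF P_integrable[OF _ sqi_iota] P_integrable[OF _ sqi_iota]])
       (use assms psi_mono_eps[OF p0 p1 assms] in auto)
  then show ?thesis unfolding Phi_def using beta by simp
qed

lemma Phi_lower:
  assumes e: "e > 0" and lb: "\<And>v. F v \<ge> blinfun_apply l v + c"
  shows "Phi e v \<ge> \<alpha> / 2 * (norm v)\<^sup>2 - norm l * norm v + c"
proof -
  have "\<bar>blinfun_apply l v\<bar> \<le> norm l * norm v" using norm_blinfun[of l v] by simp
  then show ?thesis unfolding Phi_def using lb[of v] Pint_nonneg[OF e, of v] beta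
    by (smt (verit) mult_nonneg_nonneg)
qed

lemma final_upper:
  assumes e: "e > 0" and min: "is_minimizer (Qmodel F F' \<alpha> \<beta> p \<Omega> \<iota> e uk L) z" and L: "L \<ge> 0"
  shows "\<beta> * (Gint e uk z z - Gint e uk uk uk) \<le> - blinfun_apply (F' uk) (z - uk) - \<alpha> / 2 * ((norm z)\<^sup>2 - (norm uk)\<^sup>2)"
proof -
  have "Qmodel F F' \<alpha> \<beta> p \<Omega> \<iota> e uk L z \<le> Qmodel F F' \<alpha> \<beta> p \<Omega> \<iota> e uk L uk"
    using min unfolding is_minimizer_def by blast
  then have "blinfun_apply (F' uk) (z - uk) + L / 2 * (norm (z - uk))\<^sup>2 + \<alpha> / 2 * (norm z)\<^sup>2
     + \<beta> * (Gint e uk z z - Gint e uk uk uk) \<le> \<alpha> / 2 * (norm uk)\<^sup>2"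
    unfolding Qmodel_split[OF e] by (simp add: algebra_simps)
  moreover have "0 \<le> L / 2 * (norm (z - uk))\<^sup>2" using L by simp
  ultimately show ?thesis by (simp add: algebra_simps)
qed

end


context setting begin

lemma compact_clause:
  "\<forall>vs :: nat \<Rightarrow> 'v. bounded (range vs) \<longrightarrow> (\<exists>r g. strict_mono r \<and> sq_int \<Omega> g \<and>
         (\<lambda>n. L2norm \<Omega> (\<lambda>x. \<iota> (vs (r n)) x - g x)) \<longlonglongrightarrow> 0)"
  using conjunct1[OF conjunct2[OF conjunct2[OF conjunct2[OF conjunct2[OF emb']]]]] .

lemma L2norm_to_int:
  assumes "(\<lambda>n. L2norm \<Omega> (f n)) \<longlonglongrightarrow> 0"
  shows "(\<lambda>n. \<integral>x. (f n x)\<^sup>2 \<partial>M) \<longlonglongrightarrow> 0"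
proof -
  have "(\<lambda>n. (L2norm \<Omega> (f n))\<^sup>2) \<longlonglongrightarrow> 0\<^sup>2" by (intro tendsto_power assms)
  moreover have "(L2norm \<Omega> (f n))\<^sup>2 = (\<integral>x. (f n x)\<^sup>2 \<partial>M)" for n
    unfolding L2norm_def by (simp add: integral_nonneg_AE)
  ultimately show ?thesis by simp
qed

lemma phi_riesz:
  assumes g: "sqi M g"
  shows "\<exists>y. \<forall>v. (\<integral>x. \<iota> v x * g x \<partial>M) = inner v y"
proof -
  obtain C where C: "C \<ge> 0" "\<And>v. (\<integral>x. (\<iota> v x)\<^sup>2 \<partial>M) \<le> C * (norm v)\<^sup>2"
    using iota_bound by blast
  show ?thesis
  proof (rule riesz_rep[where K = "sqrt C * sqrt (\<integral>x. (g x)\<^sup>2 \<partial>M)"])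
  fix v w :: 'v and a :: real
  show "(\<integral>x. \<iota> (v + w) x * g x \<partial>M) = (\<integral>x. \<iota> v x * g x \<partial>M) + (\<integral>x. \<iota> w x * g x \<partial>M)"
  proof -
    have "(\<integral>x. \<iota> (v + w) x * g x \<partial>M) = (\<integral>x. \<iota> v x * g x + \<iota> w x * g x \<partial>M)"
      using iota_lin[of 1 v 1 w] g[unfolded sqi_def]
      by (intro integral_cong_AE) (auto elim!: AE_mp simp: algebra_simps)
    also have "\<dots> = (\<integral>x. \<iota> v x * g x \<partial>M) + (\<integral>x. \<iota> w x * g x \<partial>M)"
      using sqi_mult_integrable[OF sqi_iota g] by (simp add: integral_add)
    finally show ?thesis .
  qed
  show "(\<integral>x. \<iota> (a *\<^sub>R v) x * g x \<partial>M) = a * (\<integral>x. \<iota> v x * g x \<partial>M)"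
  proof -
    have "(\<integral>x. \<iota> (a *\<^sub>R v) x * g x \<partial>M) = (\<integral>x. a * (\<iota> v x * g x) \<partial>M)"
      using iota_lin[of a v 0 v] g[unfolded sqi_def]
      by (intro integral_cong_AE) (auto elim!: AE_mp simp: algebra_simps)
    then show ?thesis by simp
  qed
  assume nv: "norm v \<le> 1"
  have "\<bar>\<integral>x. \<iota> v x * g x \<partial>M\<bar> \<le> sqrt (\<integral>x. (\<iota> v x)\<^sup>2 \<partial>M) * sqrt (\<integral>x. (g x)\<^sup>2 \<partial>M)"
    by (rule integral_CS[OF sqi_iota g])
  also have "\<dots> \<le> sqrt C * sqrt (\<integral>x. (g x)\<^sup>2 \<partial>M)"
  proof (rule mult_right_mono)
    have "C * (norm v)\<^sup>2 \<le> C" using C(1) nv by (simp add: mult_left_le power_le_one)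
    then show "sqrt (\<integral>x. (\<iota> v x)\<^sup>2 \<partial>M) \<le> sqrt C" using C(2)[of v] by simp
  qed simp
  finally show "\<bar>\<integral>x. \<iota> v x * g x \<partial>M\<bar> \<le> sqrt C * sqrt (\<integral>x. (g x)\<^sup>2 \<partial>M)" .
  qed
qed

lemma weak_conv_subseq:
  assumes "weak_conv xs u" "strict_mono r"
  shows "weak_conv (xs \<circ> r) u"
  unfolding weak_conv_def o_def
proof
  fix y
  have "(\<lambda>n. inner (xs n) y) \<longlonglongrightarrow> inner u y" using assms(1) unfolding weak_conv_def by blast
  from LIMSEQ_subseq_LIMSEQ[OF this assms(2)] show "(\<lambda>n. inner (xs (r n)) y) \<longlonglongrightarrow> inner u y"
    by (simp add: o_def)
qed

lemma strong_L2:
  assumes wc: "weak_conv xs ub" and bd: "bounded (range xs)"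
  shows "(\<lambda>n. \<integral>x. (\<iota> (xs n) x - \<iota> ub x)\<^sup>2 \<partial>M) \<longlonglongrightarrow> 0"
proof (rule ccontr)
  define s where "s n = (\<integral>x. (\<iota> (xs n) x - \<iota> ub x)\<^sup>2 \<partial>M)" for n
  assume "\<not> (\<lambda>n. \<integral>x. (\<iota> (xs n) x - \<iota> ub x)\<^sup>2 \<partial>M) \<longlonglongrightarrow> 0"
  then have "\<not> s \<longlonglongrightarrow> 0" unfolding s_def .
  then obtain \<delta> where \<delta>: "\<delta> > 0" "\<forall>N. \<exists>n\<ge>N. \<delta> \<le> norm (s n)"
    unfolding LIMSEQ_def dist_real_def by (auto simp: not_less)
  define A where "A = {n. \<delta> \<le> s n}"
  have s0: "s n \<ge> 0" for n unfolding s_def by simp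
  have infA: "infinite A"
    unfolding infinite_nat_iff_unbounded_le A_def using \<delta>(2) s0 by auto
  define r where "r = enumerate A"
  have r: "strict_mono r" unfolding r_def using infA by (simp add: strict_mono_enumerate)
  have rA: "\<delta> \<le> s (r j)" for j using enumerate_in_set[OF infA, of j] unfolding r_def A_def by simp
  define ys where "ys j = xs (r j) - ub" for j
  have "bounded (range ys)"
  proof -
    obtain B where B: "\<And>n. norm (xs n) \<le> B" using bd unfolding bounded_iff by auto
    have "norm (ys j) \<le> B + norm ub" for j
      unfolding ys_def using B[of "r j"] norm_triangle_ineq4[of "xs (r j)" ub] by linarith
    then show ?thesis unfolding bounded_iff by auto
  qed
  then obtain r2 g where r2: "strict_mono r2" and g: "sq_int \<Omega> g"
    and conv: "(\<lambda>n. L2norm \<Omega> (\<lambda>x. \<iota> (ys (r2 n)) x - g x)) \<longlonglongrightarrow> 0"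
    using compact_clause by blast
  have gs: "sqi M g" using g by (simp add: sq_int_def sqi_def)
  define zs where "zs j = ys (r2 j)" for j
  have conv2: "(\<lambda>n. \<integral>x. (\<iota> (zs n) x - g x)\<^sup>2 \<partial>M) \<longlonglongrightarrow> 0"
    using L2norm_to_int[OF conv] unfolding zs_def .
  have wz: "(\<lambda>j. inner (zs j) y) \<longlonglongrightarrow> 0" for y
  proof -
    have "weak_conv (xs \<circ> (r \<circ> r2)) ub" by (rule weak_conv_subseq[OF wc]) (use r r2 in \<open>simp add: strict_mono_o\<close>)
    then have "(\<lambda>j. inner (xs (r (r2 j))) y) \<longlonglongrightarrow> inner ub y" unfolding weak_conv_def by (simp add: o_def)
    then have "(\<lambda>j. inner (xs (r (r2 j))) y - inner ub y) \<longlonglongrightarrow> inner ub y - inner ub y"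
      by (intro tendsto_diff tendsto_const)
    then show ?thesis unfolding zs_def ys_def by (simp add: inner_diff_left)
  qed
  obtain y where y: "\<And>v. (\<integral>x. \<iota> v x * g x \<partial>M) = inner v y" using phi_riesz[OF gs] by blast
  have lim1: "(\<lambda>j. \<integral>x. \<iota> (zs j) x * g x \<partial>M) \<longlonglongrightarrow> 0" unfolding y by (rule wz)
  have lim2: "(\<lambda>j. \<integral>x. \<iota> (zs j) x * g x \<partial>M) \<longlonglongrightarrow> (\<integral>x. (g x)\<^sup>2 \<partial>M)"
  proof -
    define G where "G = (\<integral>x. (g x)\<^sup>2 \<partial>M)"
    have d: "\<bar>(\<integral>x. \<iota> (zs j) x * g x \<partial>M) - G\<bar> \<le> sqrt (\<integral>x. (\<iota> (zs j) x - g x)\<^sup>2 \<partial>M) * sqrt G" for j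
    proof -
      have "(\<integral>x. \<iota> (zs j) x * g x \<partial>M) - G = (\<integral>x. (\<iota> (zs j) x - g x) * g x \<partial>M)"
        unfolding G_def using sqi_mult_integrable[OF sqi_iota gs] gs
        by (simp add: integral_diff left_diff_distrib power2_eq_square sqi_def)
      then show ?thesis unfolding G_def
        using integral_CS[OF sqi_diff[OF sqi_iota gs] gs] by simp
    qed
    have t1: "(\<lambda>j. sqrt (\<integral>x. (\<iota> (zs j) x - g x)\<^sup>2 \<partial>M) * sqrt G) \<longlonglongrightarrow> sqrt 0 * sqrt G"
      by (intro tendsto_mult tendsto_real_sqrt conv2 tendsto_const)
    have "(\<lambda>j. (\<integral>x. \<iota> (zs j) x * g x \<partial>M) - G) \<longlonglongrightarrow> 0"
    proof (rule Lim_null_comparison)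
      show "\<forall>\<^sub>F j in sequentially. norm ((\<integral>x. \<iota> (zs j) x * g x \<partial>M) - G) \<le> sqrt (\<integral>x. (\<iota> (zs j) x - g x)\<^sup>2 \<partial>M) * sqrt G"
        using d by (simp add: always_eventually)
      show "(\<lambda>j. sqrt (\<integral>x. (\<iota> (zs j) x - g x)\<^sup>2 \<partial>M) * sqrt G) \<longlonglongrightarrow> 0" using t1 by simp
    qed
    then show ?thesis unfolding G_def by (rule LIM_zero_cancel)
  qed
  have G0: "(\<integral>x. (g x)\<^sup>2 \<partial>M) = 0" using LIMSEQ_unique[OF lim2 lim1] .
  have "(\<lambda>j. 2 * (\<integral>x. (g x)\<^sup>2 \<partial>M) + 2 * (\<integral>x. (\<iota> (zs j) x - g x)\<^sup>2 \<partial>M)) \<longlonglongrightarrow> 2 * 0 + 2 * 0"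
    unfolding G0 by (intro tendsto_add tendsto_mult tendsto_const conv2)
  then have lim3: "(\<lambda>j. 2 * (\<integral>x. (g x)\<^sup>2 \<partial>M) + 2 * (\<integral>x. (\<iota> (zs j) x - g x)\<^sup>2 \<partial>M)) \<longlonglongrightarrow> 0" by simp
  have szs: "s (r (r2 j)) = (\<integral>x. (\<iota> (zs j) x)\<^sup>2 \<partial>M)" for j
    unfolding s_def zs_def ys_def
    by (rule integral_cong_AE) (use iota_diff[of "xs (r (r2 j))" ub] in \<open>auto elim!: AE_mp\<close>)
  have bnd3: "norm (s (r (r2 j))) \<le> 2 * (\<integral>x. (g x)\<^sup>2 \<partial>M) + 2 * (\<integral>x. (\<iota> (zs j) x - g x)\<^sup>2 \<partial>M)" for j
    using sq_diff_bound[OF sqi_iota gs, of "zs j"] szs[of j] s0[of "r (r2 j)"] by simp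
  have "(\<lambda>j. s (r (r2 j))) \<longlonglongrightarrow> 0"
  proof (rule Lim_null_comparison[OF _ lim3])
    show "\<forall>\<^sub>F j in sequentially. norm (s (r (r2 j))) \<le> 2 * (\<integral>x. (g x)\<^sup>2 \<partial>M) + 2 * (\<integral>x. (\<iota> (zs j) x - g x)\<^sup>2 \<partial>M)"
      using bnd3 by (simp add: always_eventually)
  qed
  then have "eventually (\<lambda>j. s (r (r2 j)) < \<delta>) sequentially"
    using \<delta>(1) by (rule order_tendstoD)
  then obtain j where "s (r (r2 j)) < \<delta>" by (auto dest: eventually_happens)
  then show False using rA[of "r2 j"] by simp
qed

end


context setting begin

lemma seq_props:
  fixes \<epsilon> :: "nat \<Rightarrow> real" and u :: "nat \<Rightarrow> 'v" and Ls :: "nat \<Rightarrow> real"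
  assumes dec: "decseq \<epsilon>" and epos: "\<And>k. \<epsilon> k > 0"
    and minz: "\<And>k. is_minimizer (Qmodel F F' \<alpha> \<beta> p \<Omega> \<iota> (\<epsilon> k) (u k) (Ls k)) (u (Suc k))"
    and dc: "\<And>k. descent_cond F F' (u k) (Ls k) (u (Suc k))"
    and lb: "\<And>v. F v \<ge> blinfun_apply l v + c"
  shows "(\<lambda>k. norm (u (Suc k) - u k)) \<longlonglongrightarrow> 0" and "\<exists>R. \<forall>k. norm (u k) \<le> R"
proof -
  define d where "d k = (norm (u (Suc k) - u k))\<^sup>2" for k
  define P0 where "P0 = Phi (\<epsilon> 0) (u 0)"
  have step: "Phi (\<epsilon> (Suc k)) (u (Suc k)) \<le> Phi (\<epsilon> k) (u k) - \<alpha> / 2 * d k" for k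
  proof -
    have "Phi (\<epsilon> (Suc k)) (u (Suc k)) \<le> Phi (\<epsilon> k) (u (Suc k))"
      by (rule Phi_mono) (use epos dec in \<open>auto simp: decseq_Suc_iff\<close>)
    also have "\<dots> \<le> Phi (\<epsilon> k) (u k) - \<alpha> / 2 * d k"
      unfolding d_def by (rule descent_step[OF epos minz dc])
    finally show ?thesis .
  qed
  have tel: "Phi (\<epsilon> n) (u n) + \<alpha> / 2 * (\<Sum>k<n. d k) \<le> P0" for n
  proof (induction n)
    case 0 then show ?case by (simp add: P0_def)
  next
    case (Suc n)
    then show ?case using step[of n] by (simp add: algebra_simps)
  qed
  define nl where "nl = norm l"
  have low: "Phi (\<epsilon> n) v \<ge> \<alpha> / 2 * (norm v)\<^sup>2 - nl * norm v + c" for n v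
    unfolding nl_def by (rule Phi_lower[OF epos lb])
  have quad: "\<alpha> / 2 * x\<^sup>2 - nl * x \<ge> - nl\<^sup>2 / (2 * \<alpha>)" for x :: real
  proof -
    have "0 \<le> (\<alpha> * x - nl)\<^sup>2" by simp
    then have "0 \<le> \<alpha>\<^sup>2 * x\<^sup>2 - 2 * \<alpha> * nl * x + nl\<^sup>2" by (simp add: power2_eq_square algebra_simps)
    then show ?thesis using alpha by (simp add: field_simps power2_eq_square)
  qed
  have d0: "d k \<ge> 0" for k by (simp add: d_def)
  have sumb: "(\<Sum>k<n. d k) \<le> 2 / \<alpha> * (P0 - c + nl\<^sup>2 / (2 * \<alpha>))" for n
  proof -
    have "\<alpha> / 2 * (\<Sum>k<n. d k) \<le> P0 - c + nl\<^sup>2 / (2 * \<alpha>)"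
      using tel[of n] low[where n=n and v="u n"] quad[of "norm (u n)"] by linarith
    then show ?thesis using alpha by (simp add: field_simps)
  qed
  have "summable d" by (rule summableI_nonneg_bounded[OF d0 sumb])
  then have "d \<longlonglongrightarrow> 0" by (rule summable_LIMSEQ_zero)
  then have "(\<lambda>k. sqrt (d k)) \<longlonglongrightarrow> sqrt 0" by (intro tendsto_real_sqrt)
  then show "(\<lambda>k. norm (u (Suc k) - u k)) \<longlonglongrightarrow> 0" by (simp add: d_def)
  define R where "R = max 1 (2 * (nl + \<bar>P0 - c\<bar>) / \<alpha>)"
  show "\<exists>R. \<forall>k. norm (u k) \<le> R"
  proof (intro exI[of _ R] allI)
    fix k
    define x where "x = norm (u k)"
    have sk: "0 \<le> (\<Sum>k<k. d k)" using d0 by (simp add: sum_nonneg)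
    have "0 \<le> \<alpha> / 2 * (\<Sum>k<k. d k)" using sk alpha by simp
    then have h: "\<alpha> / 2 * x\<^sup>2 - nl * x + c \<le> P0"
      using tel[of k] low[where n=k and v="u k"] unfolding x_def by linarith
    show "norm (u k) \<le> R"
    proof (cases "x \<le> 1")
      case True then show ?thesis unfolding R_def x_def by simp
    next
      case False
      then have x1: "x > 1" by simp
      have nl0: "nl \<ge> 0" by (simp add: nl_def)
      have h2: "\<alpha> / 2 * x\<^sup>2 \<le> nl * x + (P0 - c)" using h by linarith
      have "\<alpha> / 2 * x * x \<le> nl * x + \<bar>P0 - c\<bar>" using h2 abs_ge_self[of "P0 - c"]
        unfolding power2_eq_square by (simp only: mult.assoc)
      also have "\<dots> \<le> (nl + \<bar>P0 - c\<bar>) * x"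
      proof -
        have "\<bar>P0 - c\<bar> * 1 \<le> \<bar>P0 - c\<bar> * x" using x1 by (intro mult_left_mono) auto
        then show ?thesis by (simp add: algebra_simps)
      qed
      finally have "\<alpha> / 2 * x \<le> nl + \<bar>P0 - c\<bar>" using x1 by (simp add: mult.commute mult_le_cancel_left_pos)
      then have "x \<le> 2 * (nl + \<bar>P0 - c\<bar>) / \<alpha>" using alpha by (simp add: field_simps)
      then show ?thesis unfolding R_def x_def by simp
    qed
  qed
qed

end


context setting begin

lemma powr_conv:
  assumes f: "\<And>n. sqi M (f n)" and w: "sqi M w"
    and N: "(\<lambda>n. \<integral>x. (f n x - w x)\<^sup>2 \<partial>M) \<longlonglongrightarrow> 0"
  shows "(\<lambda>n. \<integral>x. \<bar>f n x\<bar> powr p \<partial>M) \<longlonglongrightarrow> (\<integral>x. \<bar>w x\<bar> powr p \<partial>M)"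
proof (rule LIMSEQ_I)
  interpret finite_measure M by (rule fin)
  fix \<delta> :: real assume \<delta>: "\<delta> > 0"
  define \<mu> where "\<mu> = measure M (space M)"
  have \<mu>0: "\<mu> \<ge> 0" by (simp add: \<mu>_def)
  define \<eta> where "\<eta> = (\<delta> / (2 * (\<mu> + 1))) powr (1 / p)"
  have \<eta>0: "\<eta> > 0" using \<delta> \<mu>0 by (simp add: \<eta>_def)
  have \<eta>p: "\<eta> powr p = \<delta> / (2 * (\<mu> + 1))"
    unfolding \<eta>_def using \<delta> \<mu>0 p0 by (simp add: powr_powr)
  have small1: "\<eta> powr p * \<mu> < \<delta> / 2"
  proof -
    have "\<eta> powr p * \<mu> = \<delta> * \<mu> / (2 * (\<mu> + 1))" unfolding \<eta>p by simp
    also have "\<dots> < \<delta> / 2" using \<delta> \<mu>0 by (simp add: field_simps)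
    finally show ?thesis .
  qed
  define K where "K = \<eta> powr (p - 2)"
  have K0: "K > 0" unfolding K_def using \<eta>0 by simp
  have "eventually (\<lambda>n. (\<integral>x. (f n x - w x)\<^sup>2 \<partial>M) < \<delta> / (2 * K)) sequentially"
    using N by (rule order_tendstoD) (use \<delta> K0 in simp)
  then obtain n0 where n0: "\<And>n. n \<ge> n0 \<Longrightarrow> (\<integral>x. (f n x - w x)\<^sup>2 \<partial>M) < \<delta> / (2 * K)"
    unfolding eventually_sequentially by blast
  show "\<exists>no. \<forall>n\<ge>no. norm ((\<integral>x. \<bar>f n x\<bar> powr p \<partial>M) - (\<integral>x. \<bar>w x\<bar> powr p \<partial>M)) < \<delta>"
  proof (intro exI[of _ n0] allI impI)
    fix n assume n: "n \<ge> n0"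
    have fd: "sqi M (\<lambda>x. f n x - w x)" by (rule sqi_diff[OF f w])
    have ip1: "integrable M (\<lambda>x. \<bar>f n x\<bar> powr p)" by (rule abs_powr_integrable[OF f]) (use p0 p1 in auto)
    have ip2: "integrable M (\<lambda>x. \<bar>w x\<bar> powr p)" by (rule abs_powr_integrable[OF w]) (use p0 p1 in auto)
    have ih: "integrable M (\<lambda>x. \<eta> powr p + K * (f n x - w x)\<^sup>2)"
      using fd by (simp add: sqi_def)
    have "\<bar>(\<integral>x. \<bar>f n x\<bar> powr p \<partial>M) - (\<integral>x. \<bar>w x\<bar> powr p \<partial>M)\<bar>
        = \<bar>\<integral>x. \<bar>f n x\<bar> powr p - \<bar>w x\<bar> powr p \<partial>M\<bar>"
      using ip1 ip2 by simp
    also have "\<dots> \<le> (\<integral>x. \<eta> powr p + K * (f n x - w x)\<^sup>2 \<partial>M)"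
    proof (rule integral_abs_bound_integral)
      show "integrable M (\<lambda>x. \<bar>f n x\<bar> powr p - \<bar>w x\<bar> powr p)" using ip1 ip2 by simp
      show "integrable M (\<lambda>x. \<eta> powr p + K * (f n x - w x)\<^sup>2)" by (rule ih)
      fix x
      have "\<bar>\<bar>f n x\<bar> powr p - \<bar>w x\<bar> powr p\<bar> \<le> \<bar>f n x - w x\<bar> powr p"
        by (rule abs_powr_diff) (use p0 p1 in auto)
      also have "\<dots> \<le> \<eta> powr p + \<eta> powr (p-2) * (f n x - w x)\<^sup>2"
        by (rule abs_powr_le_sq) (use p0 p1 \<eta>0 in auto)
      finally show "\<bar>\<bar>f n x\<bar> powr p - \<bar>w x\<bar> powr p\<bar> \<le> \<eta> powr p + K * (f n x - w x)\<^sup>2"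
        unfolding K_def .
    qed
    also have "\<dots> = \<eta> powr p * \<mu> + K * (\<integral>x. (f n x - w x)\<^sup>2 \<partial>M)"
      using fd by (simp add: sqi_def \<mu>_def mult.commute)
    also have "\<dots> < \<delta> / 2 + K * (\<delta> / (2 * K))"
      using small1 n0[OF n] K0 by (intro add_less_le_mono mult_left_mono) auto
    also have "\<dots> = \<delta>" using K0 by simp
    finally show "norm ((\<integral>x. \<bar>f n x\<bar> powr p \<partial>M) - (\<integral>x. \<bar>w x\<bar> powr p \<partial>M)) < \<delta>" by simp
  qed
qed

end


lemma sq_powr_abs: "0 < p \<Longrightarrow> ((x::real)\<^sup>2) powr (p/2) = \<bar>x\<bar> powr p"
proof (cases "x = 0")
  case False
  have e: "(x\<^sup>2) = \<bar>x\<bar> powr 2" using False by (simp add: powr_numeral)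
  have "(\<bar>x\<bar> powr 2) powr (p/2) = \<bar>x\<bar> powr (2 * (p/2))" by (rule powr_powr)
  then show ?thesis unfolding e by simp
qed simp

context setting begin

lemma J_approx:
  assumes e: "e > 0"
  shows "\<bar>2 * Gint e uk uk uk - p * (\<integral>x. \<bar>\<iota> uk x\<bar> powr p \<partial>M)\<bar> \<le> p * e powr p * measure M (space M)"
proof -
  interpret finite_measure M by (rule fin)
  have ip: "integrable M (\<lambda>x. \<bar>\<iota> uk x\<bar> powr p)" by (rule abs_powr_integrable[OF sqi_iota]) (use p0 p1 in auto)
  have ig: "integrable M (\<lambda>x. dpsi p e ((\<iota> uk x)\<^sup>2) * (\<iota> uk x * \<iota> uk x))" by (rule G_integrable_iota[OF e])
  have "2 * Gint e uk uk uk - p * (\<integral>x. \<bar>\<iota> uk x\<bar> powr p \<partial>M)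
      = (\<integral>x. 2 * (dpsi p e ((\<iota> uk x)\<^sup>2) * (\<iota> uk x * \<iota> uk x)) - p * \<bar>\<iota> uk x\<bar> powr p \<partial>M)"
    unfolding Gint_def using ip ig by simp
  also have "\<bar>\<dots>\<bar> \<le> (\<integral>x. p * e powr p \<partial>M)"
  proof (rule integral_abs_bound_integral)
    show "integrable M (\<lambda>x. 2 * (dpsi p e ((\<iota> uk x)\<^sup>2) * (\<iota> uk x * \<iota> uk x)) - p * \<bar>\<iota> uk x\<bar> powr p)"
      using ip ig by simp
    fix x
    have "\<bar>2 * dpsi p e ((\<iota> uk x)\<^sup>2) * (\<iota> uk x)\<^sup>2 - p * ((\<iota> uk x)\<^sup>2) powr (p/2)\<bar> \<le> p * e powr p"
      by (rule dpsi_approx[OF p0 p1 e]) simp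
    then show "\<bar>2 * (dpsi p e ((\<iota> uk x)\<^sup>2) * (\<iota> uk x * \<iota> uk x)) - p * \<bar>\<iota> uk x\<bar> powr p\<bar> \<le> p * e powr p"
      using sq_powr_abs[OF p0] by (simp add: power2_eq_square mult.assoc)
  qed simp
  also have "\<dots> = p * e powr p * measure M (space M)" by simp
  finally show ?thesis .
qed

lemma P_approx:
  assumes e: "e > 0"
  shows "\<bar>Pint e v - (\<integral>x. \<bar>\<iota> v x\<bar> powr p \<partial>M)\<bar> \<le> e powr p * measure M (space M)"
proof -
  interpret finite_measure M by (rule fin)
  have ip: "integrable M (\<lambda>x. \<bar>\<iota> v x\<bar> powr p)" by (rule abs_powr_integrable[OF sqi_iota]) (use p0 p1 in auto)
  have ig: "integrable M (\<lambda>x. psi p e ((\<iota> v x)\<^sup>2))" by (rule P_integrable[OF e sqi_iota])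
  have "Pint e v - (\<integral>x. \<bar>\<iota> v x\<bar> powr p \<partial>M) = (\<integral>x. psi p e ((\<iota> v x)\<^sup>2) - \<bar>\<iota> v x\<bar> powr p \<partial>M)"
    unfolding Pint_def using ip ig by simp
  also have "\<bar>\<dots>\<bar> \<le> (\<integral>x. e powr p \<partial>M)"
  proof (rule integral_abs_bound_integral)
    show "integrable M (\<lambda>x. psi p e ((\<iota> v x)\<^sup>2) - \<bar>\<iota> v x\<bar> powr p)" using ip ig by simp
    fix x
    show "\<bar>psi p e ((\<iota> v x)\<^sup>2) - \<bar>\<iota> v x\<bar> powr p\<bar> \<le> e powr p"
      using psi_approx[OF p0 p1 e, of "(\<iota> v x)\<^sup>2"] sq_powr_abs[OF p0] by simp
  qed simp
  also have "\<dots> = e powr p * measure M (space M)" by (simp add: mult.commute)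
  finally show ?thesis .
qed

end


context setting begin

lemma final:
  fixes \<epsilon> :: "nat \<Rightarrow> real" and u :: "nat \<Rightarrow> 'v" and Ls :: "nat \<Rightarrow> real" and kn :: "nat \<Rightarrow> nat" and ub :: 'v
  assumes dec: "decseq \<epsilon>" and epos: "\<And>k. \<epsilon> k > 0" and elim: "\<epsilon> \<longlonglongrightarrow> 0"
    and minz: "\<And>k. is_minimizer (Qmodel F F' \<alpha> \<beta> p \<Omega> \<iota> (\<epsilon> k) (u k) (Ls k)) (u (Suc k))"
    and dc: "\<And>k. descent_cond F F' (u k) (Ls k) (u (Suc k))"
    and lb: "\<And>v. F v \<ge> blinfun_apply l v + c"
    and Lnn: "\<And>k. Ls k \<ge> 0"
    and sub: "strict_mono kn" and wc: "weak_conv (\<lambda>n. u (kn n)) ub"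
    and Fc: "\<forall>us v. weak_conv us v \<longrightarrow> (\<lambda>n. F' (us n)) \<longlonglongrightarrow> F' v"
  shows "(\<lambda>n. 2 * (\<integral>x. dpsi p (\<epsilon> (kn n)) ((\<iota> (u (kn n)) x)\<^sup>2) * (\<iota> (u (Suc (kn n))) x)\<^sup>2 \<partial>M))
         \<longlonglongrightarrow> p * (\<integral>x. \<bar>\<iota> ub x\<bar> powr p \<partial>M)"
proof -
  interpret finite_measure M by (rule fin)
  define \<mu> where "\<mu> = measure M (space M)"
  obtain R where R: "\<And>k. norm (u k) \<le> R" using seq_props(2)[OF dec epos minz dc lb] by blast
  have dlim: "(\<lambda>k. norm (u (Suc k) - u k)) \<longlonglongrightarrow> 0" by (rule seq_props(1)[OF dec epos minz dc lb])
  define a where "a n = u (kn n)" for n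
  define b where "b n = u (Suc (kn n))" for n
  define e where "e n = \<epsilon> (kn n)" for n
  have e0: "e n > 0" for n using epos by (simp add: e_def)
  have elim': "e \<longlonglongrightarrow> 0" unfolding e_def using LIMSEQ_subseq_LIMSEQ[OF elim sub] by (simp add: o_def)
  have dn: "(\<lambda>n. norm (b n - a n)) \<longlonglongrightarrow> 0"
    unfolding a_def b_def using LIMSEQ_subseq_LIMSEQ[OF dlim sub] by (simp add: o_def)
  have bdd: "bounded (range a)" unfolding bounded_iff a_def using R by blast
  have wca: "weak_conv a ub" unfolding a_def using wc .
  have Na: "(\<lambda>n. \<integral>x. (\<iota> (a n) x - \<iota> ub x)\<^sup>2 \<partial>M) \<longlonglongrightarrow> 0" by (rule strong_L2[OF wca bdd])
  obtain C where C: "C \<ge> 0" "\<And>v. (\<integral>x. (\<iota> v x)\<^sup>2 \<partial>M) \<le> C * (norm v)\<^sup>2"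
    using iota_bound by blast
  have Nba: "(\<lambda>n. \<integral>x. (\<iota> (b n) x - \<iota> (a n) x)\<^sup>2 \<partial>M) \<longlonglongrightarrow> 0"
  proof (rule Lim_null_comparison)
    have "(\<lambda>n. C * (norm (b n - a n))\<^sup>2) \<longlonglongrightarrow> C * 0\<^sup>2" by (intro tendsto_intros dn)
    then show "(\<lambda>n. C * (norm (b n - a n))\<^sup>2) \<longlonglongrightarrow> 0" by simp
    have "norm (\<integral>x. (\<iota> (b n) x - \<iota> (a n) x)\<^sup>2 \<partial>M) \<le> C * (norm (b n - a n))\<^sup>2" for n
    proof -
      have "(\<integral>x. (\<iota> (b n) x - \<iota> (a n) x)\<^sup>2 \<partial>M) = (\<integral>x. (\<iota> (b n - a n) x)\<^sup>2 \<partial>M)"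
        by (rule integral_cong_AE) (use iota_diff[of "b n" "a n"] in \<open>auto elim!: AE_mp\<close>)
      then show ?thesis using C(2)[of "b n - a n"] by simp
    qed
    then show "\<forall>\<^sub>F n in sequentially. norm (\<integral>x. (\<iota> (b n) x - \<iota> (a n) x)\<^sup>2 \<partial>M) \<le> C * (norm (b n - a n))\<^sup>2"
      by (simp add: always_eventually)
  qed
  have Nb: "(\<lambda>n. \<integral>x. (\<iota> (b n) x - \<iota> ub x)\<^sup>2 \<partial>M) \<longlonglongrightarrow> 0"
  proof (rule Lim_null_comparison)
    have "(\<lambda>n. 2 * (\<integral>x. (\<iota> (a n) x - \<iota> ub x)\<^sup>2 \<partial>M) + 2 * (\<integral>x. (\<iota> (b n) x - \<iota> (a n) x)\<^sup>2 \<partial>M)) \<longlonglongrightarrow> 2 * 0 + 2 * 0"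
      by (intro tendsto_intros Na Nba)
    then show "(\<lambda>n. 2 * (\<integral>x. (\<iota> (a n) x - \<iota> ub x)\<^sup>2 \<partial>M) + 2 * (\<integral>x. (\<iota> (b n) x - \<iota> (a n) x)\<^sup>2 \<partial>M)) \<longlonglongrightarrow> 0"
      by simp
    have "norm (\<integral>x. (\<iota> (b n) x - \<iota> ub x)\<^sup>2 \<partial>M) \<le> 2 * (\<integral>x. (\<iota> (a n) x - \<iota> ub x)\<^sup>2 \<partial>M) + 2 * (\<integral>x. (\<iota> (b n) x - \<iota> (a n) x)\<^sup>2 \<partial>M)" for n
      using sq_diff_bound[OF sqi_diff[OF sqi_iota sqi_iota] sqi_diff[OF sqi_iota sqi_iota], of "b n" ub "a n" ub]
      by simp
    then show "\<forall>\<^sub>F n in sequentially. norm (\<integral>x. (\<iota> (b n) x - \<iota> ub x)\<^sup>2 \<partial>M) \<le> 2 * (\<integral>x. (\<iota> (a n) x - \<iota> ub x)\<^sup>2 \<partial>M) + 2 * (\<integral>x. (\<iota> (b n) x - \<iota> (a n) x)\<^sup>2 \<partial>M)"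
      by (simp add: always_eventually)
  qed
  define W where "W = (\<integral>x. \<bar>\<iota> ub x\<bar> powr p \<partial>M)"
  have Pa: "(\<lambda>n. \<integral>x. \<bar>\<iota> (a n) x\<bar> powr p \<partial>M) \<longlonglongrightarrow> W"
    unfolding W_def by (rule powr_conv[OF sqi_iota sqi_iota Na])
  have Pb: "(\<lambda>n. \<integral>x. \<bar>\<iota> (b n) x\<bar> powr p \<partial>M) \<longlonglongrightarrow> W"
    unfolding W_def by (rule powr_conv[OF sqi_iota sqi_iota Nb])
  have epl: "(\<lambda>n. e n powr p * \<mu>) \<longlonglongrightarrow> 0"
  proof -
    have "(\<lambda>n. e n powr p) \<longlonglongrightarrow> 0"
      by (rule tendsto_zero_powrI[OF elim' tendsto_const]) (use e0 p0 in \<open>auto intro: always_eventually less_imp_le\<close>)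
    then have "(\<lambda>n. e n powr p * \<mu>) \<longlonglongrightarrow> 0 * \<mu>" by (intro tendsto_intros)
    then show ?thesis by simp
  qed
  define J where "J n = Gint (e n) (a n) (a n) (a n)" for n
  define I where "I n = Gint (e n) (a n) (b n) (b n)" for n
  have Jc: "(\<lambda>n. 2 * J n) \<longlonglongrightarrow> p * W"
  proof -
    have "(\<lambda>n. 2 * J n - p * (\<integral>x. \<bar>\<iota> (a n) x\<bar> powr p \<partial>M)) \<longlonglongrightarrow> 0"
    proof (rule Lim_null_comparison)
      have "(\<lambda>n. p * (e n powr p * \<mu>)) \<longlonglongrightarrow> p * 0" by (intro tendsto_intros epl)
      then show "(\<lambda>n. p * (e n powr p * \<mu>)) \<longlonglongrightarrow> 0" by simp
      show "\<forall>\<^sub>F n in sequentially. norm (2 * J n - p * (\<integral>x. \<bar>\<iota> (a n) x\<bar> powr p \<partial>M)) \<le> p * (e n powr p * \<mu>)"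
        unfolding J_def \<mu>_def using J_approx[OF e0] by (simp add: always_eventually mult.assoc)
    qed
    moreover have "(\<lambda>n. p * (\<integral>x. \<bar>\<iota> (a n) x\<bar> powr p \<partial>M)) \<longlonglongrightarrow> p * W" by (intro tendsto_intros Pa)
    ultimately have "(\<lambda>n. (2 * J n - p * (\<integral>x. \<bar>\<iota> (a n) x\<bar> powr p \<partial>M)) + p * (\<integral>x. \<bar>\<iota> (a n) x\<bar> powr p \<partial>M)) \<longlonglongrightarrow> 0 + p * W"
      by (rule tendsto_add)
    then show ?thesis by simp
  qed
  have Papx: "(\<lambda>n. Pint (e n) (v n) - (\<integral>x. \<bar>\<iota> (v n) x\<bar> powr p \<partial>M)) \<longlonglongrightarrow> 0" for v
  proof (rule Lim_null_comparison[OF _ epl])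
    show "\<forall>\<^sub>F n in sequentially. norm (Pint (e n) (v n) - (\<integral>x. \<bar>\<iota> (v n) x\<bar> powr p \<partial>M)) \<le> e n powr p * \<mu>"
      unfolding \<mu>_def using P_approx[OF e0] by (simp add: always_eventually)
  qed
  have Pdiff: "(\<lambda>n. Pint (e n) (b n) - Pint (e n) (a n)) \<longlonglongrightarrow> 0"
  proof -
    have "(\<lambda>n. (Pint (e n) (b n) - (\<integral>x. \<bar>\<iota> (b n) x\<bar> powr p \<partial>M)) - (Pint (e n) (a n) - (\<integral>x. \<bar>\<iota> (a n) x\<bar> powr p \<partial>M))
        + ((\<integral>x. \<bar>\<iota> (b n) x\<bar> powr p \<partial>M) - (\<integral>x. \<bar>\<iota> (a n) x\<bar> powr p \<partial>M))) \<longlonglongrightarrow> 0 - 0 + (W - W)"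
      by (intro tendsto_intros Papx Pa Pb)
    then show ?thesis by simp
  qed
  have Fa: "(\<lambda>n. F' (a n)) \<longlonglongrightarrow> F' ub" using Fc wca by blast
  have U: "(\<lambda>n. (- blinfun_apply (F' (a n)) (b n - a n) - \<alpha> / 2 * ((norm (b n))\<^sup>2 - (norm (a n))\<^sup>2)) / \<beta>) \<longlonglongrightarrow> 0"
  proof -
    have t1: "(\<lambda>n. blinfun_apply (F' (a n)) (b n - a n)) \<longlonglongrightarrow> 0"
    proof (rule Lim_null_comparison)
      have "(\<lambda>n. norm (F' (a n)) * norm (b n - a n)) \<longlonglongrightarrow> norm (F' ub) * 0"
        by (intro tendsto_intros Fa dn)
      then show "(\<lambda>n. norm (F' (a n)) * norm (b n - a n)) \<longlonglongrightarrow> 0" by simp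
      show "\<forall>\<^sub>F n in sequentially. norm (blinfun_apply (F' (a n)) (b n - a n)) \<le> norm (F' (a n)) * norm (b n - a n)"
        by (intro always_eventually allI norm_blinfun)
    qed
    have t2: "(\<lambda>n. (norm (b n))\<^sup>2 - (norm (a n))\<^sup>2) \<longlonglongrightarrow> 0"
    proof (rule Lim_null_comparison)
      have "(\<lambda>n. norm (b n - a n) * (2 * R)) \<longlonglongrightarrow> 0 * (2 * R)"
        by (intro tendsto_intros dn)
      then show "(\<lambda>n. norm (b n - a n) * (2 * R)) \<longlonglongrightarrow> 0" by simp
      have "norm ((norm (b n))\<^sup>2 - (norm (a n))\<^sup>2) \<le> norm (b n - a n) * (2 * R)" for n
      proof -
        have "(norm (b n))\<^sup>2 - (norm (a n))\<^sup>2 = (norm (b n) - norm (a n)) * (norm (b n) + norm (a n))"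
          by (simp add: power2_eq_square algebra_simps)
        also have "\<bar>\<dots>\<bar> = \<bar>norm (b n) - norm (a n)\<bar> * (norm (b n) + norm (a n))" by (simp add: abs_mult)
        also have "\<dots> \<le> norm (b n - a n) * (2 * R)"
        proof (rule mult_mono)
          show "\<bar>norm (b n) - norm (a n)\<bar> \<le> norm (b n - a n)" by (rule norm_triangle_ineq3)
          show "norm (b n) + norm (a n) \<le> 2 * R" using R[of "Suc (kn n)"] R[of "kn n"] by (simp add: a_def b_def)
        qed auto
        finally show ?thesis by simp
      qed
      then show "\<forall>\<^sub>F n in sequentially. norm ((norm (b n))\<^sup>2 - (norm (a n))\<^sup>2) \<le> norm (b n - a n) * (2 * R)"
        by (simp add: always_eventually)
    qed
    have "(\<lambda>n. (- blinfun_apply (F' (a n)) (b n - a n) - \<alpha> / 2 * ((norm (b n))\<^sup>2 - (norm (a n))\<^sup>2)) / \<beta>) \<longlonglongrightarrow> (- 0 - \<alpha> / 2 * 0) / \<beta>"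
      by (intro tendsto_intros t1 t2) (use beta in simp)
    then show ?thesis by simp
  qed
  have up: "I n - J n \<le> (- blinfun_apply (F' (a n)) (b n - a n) - \<alpha> / 2 * ((norm (b n))\<^sup>2 - (norm (a n))\<^sup>2)) / \<beta>" for n
  proof -
    have "\<beta> * (I n - J n) \<le> - blinfun_apply (F' (a n)) (b n - a n) - \<alpha> / 2 * ((norm (b n))\<^sup>2 - (norm (a n))\<^sup>2)"
      unfolding I_def J_def a_def b_def e_def by (rule final_upper[OF epos minz Lnn])
    then show ?thesis using beta by (simp add: field_simps)
  qed
  have lo: "Pint (e n) (b n) - Pint (e n) (a n) \<le> I n - J n" for n
    using Pint_concave[OF e0, of n "b n" "a n"] unfolding I_def J_def by simp
  have D: "(\<lambda>n. I n - J n) \<longlonglongrightarrow> 0"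
    by (rule real_tendsto_sandwich[OF always_eventually always_eventually Pdiff U]) (use lo up in auto)
  have "(\<lambda>n. 2 * J n + 2 * (I n - J n)) \<longlonglongrightarrow> p * W + 2 * 0"
    by (intro tendsto_intros Jc D)
  moreover have "2 * J n + 2 * (I n - J n) = 2 * (\<integral>x. dpsi p (\<epsilon> (kn n)) ((\<iota> (u (kn n)) x)\<^sup>2) * (\<iota> (u (Suc (kn n))) x)\<^sup>2 \<partial>M)" for n
    unfolding I_def Gint_def a_def b_def e_def by (simp add: power2_eq_square)
  ultimately show ?thesis unfolding W_def by simp
qed

end

theorem lemma7p7:
  fixes \<Omega> :: "'d::euclidean_space set"
    and \<iota> :: "'v::{real_inner, complete_space} \<Rightarrow> 'd \<Rightarrow> real"
    and F :: "'v \<Rightarrow> real" and F' :: "'v \<Rightarrow> 'v \<Rightarrow>\<^sub>L real"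
    and \<alpha> \<beta> p \<gamma> Lt :: real and \<epsilon> :: "nat \<Rightarrow> real" and u0 ub :: 'v
    and Ls :: "nat \<Rightarrow> real" and u :: "nat \<Rightarrow> 'v" and kn :: "nat \<Rightarrow> nat"
  assumes dom: "lipschitz_domain \<Omega>" "bounded \<Omega>"
    and emb: "compact_dense_L2_embedding \<Omega> \<iota>"
    and F_wlsc: "\<forall>us v. weak_conv us v \<longrightarrow> ereal (F v) \<le> liminf (\<lambda>n. ereal (F (us n)))"
    and F_affine_lb: "\<exists>l :: 'v \<Rightarrow>\<^sub>L real. \<exists>c. \<forall>v. F v \<ge> blinfun_apply l v + c"
    and F_deriv: "\<forall>v. (F has_derivative blinfun_apply (F' v)) (at v)"
    and F'_cont: "continuous_on UNIV F'"
    and params: "\<alpha> > 0" "\<beta> > 0" "0 < p" "p < 1"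
    and F'_compl_cont: "\<forall>us v. weak_conv us v \<longrightarrow> (\<lambda>n. F' (us n)) \<longlonglongrightarrow> F' v"
    and F'_lip: "\<forall>B. bounded B \<longrightarrow>
                   (\<exists>M. \<forall>v\<in>B. \<forall>w\<in>B. norm (F' v - F' w) \<le> M * norm (v - w))"
    and eps: "decseq \<epsilon>" "\<epsilon> \<longlonglongrightarrow> 0" "\<forall>k. \<epsilon> k > 0"
    and alg_params: "\<gamma> > 1" "Lt > 0"
    and alg: "algA_sequence F F' \<alpha> \<beta> p \<Omega> \<iota> \<epsilon> \<gamma> Lt u0 Ls u"
    and sub: "strict_mono kn"
    and wconv: "weak_conv (\<lambda>n. u (kn n)) ub"
  shows "(\<lambda>n. 2 * (\<integral>x. dpsi p (\<epsilon> (kn n)) ((\<iota> (u (kn n)) x)\<^sup>2) * (\<iota> (u (Suc (kn n))) x)\<^sup>2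
                   \<partial>lebesgue_on \<Omega>))
         \<longlonglongrightarrow> p * (\<integral>x. \<bar>\<iota> ub x\<bar> powr p \<partial>lebesgue_on \<Omega>)"
proof -
  have \<Omega>lm: "\<Omega> \<in> lmeasurable"
    using dom unfolding lipschitz_domain_def by (intro lmeasurable_open) auto
  interpret S: setting \<Omega> \<iota> F F' \<alpha> \<beta> p
    by (unfold_locales) (use \<Omega>lm emb params in auto)
  obtain l c where lb: "\<And>v. F v \<ge> blinfun_apply l v + c" using F_affine_lb by blast
  have A: "\<forall>k. Ls k \<in> L_candidates Lt \<gamma> \<and>
          is_minimizer (Qmodel F F' \<alpha> \<beta> p \<Omega> \<iota> (\<epsilon> k) (u k) (Ls k)) (u (Suc k)) \<and>
          descent_cond F F' (u k) (Ls k) (u (Suc k)) \<and>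
          (\<forall>L\<in>L_candidates Lt \<gamma>. L < Ls k \<longrightarrow>
             (\<forall>z. is_minimizer (Qmodel F F' \<alpha> \<beta> p \<Omega> \<iota> (\<epsilon> k) (u k) L) z \<longrightarrow>
                  \<not> descent_cond F F' (u k) L z))"
    using alg unfolding algA_sequence_def by (rule conjunct2)
  have minz: "\<And>k. is_minimizer (Qmodel F F' \<alpha> \<beta> p \<Omega> \<iota> (\<epsilon> k) (u k) (Ls k)) (u (Suc k))"
    using A by blast
  have dc: "\<And>k. descent_cond F F' (u k) (Ls k) (u (Suc k))" using A by blast
  have Lnn: "Ls k \<ge> 0" for k
  proof -
    have "Ls k \<in> L_candidates Lt \<gamma>" using A by blast
    then show ?thesis unfolding L_candidates_def using alg_params by auto
  qed
  show ?thesis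
    by (rule S.final[OF eps(1) _ eps(2) minz dc lb Lnn sub wconv F'_compl_cont]) (use eps(3) in auto)
qed

end
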